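(* Let $X_1,X_2,\dots,X_n$ be a martingale with values in $\mathbb R^d$ and let $\mu_i$ be the marginal distribution of $X_i$. Then there exists a martingale $\tilde X_1,\dots,\tilde X_n$ with the Markov property such that the marginal distribution of $\tilde X_i$ is $\mu_i$ for all $i=1,\dots,n$. *)

theory Defs
  imports "HOL-Probability.Probability"
begin

definition nat_filtr :: "'w measure \<Rightarrow> (nat \<Rightarrow> 'w \<Rightarrow> 'a::topological_space) \<Rightarrow> nat \<Rightarrow> 'w measure" where
  "nat_filtr M X i = sigma (space M) (\<Union>j\<in>{1..i}. {X j -` A \<inter> space M | A. A \<in> sets borel})"

definition martingale :: "'w measure \<Rightarrow> (nat \<Rightarrow> 'w \<Rightarrow> 'a::euclidean_space) \<Rightarrow> nat \<Rightarrow> bool" where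
  "martingale M X n \<longleftrightarrow>
     (\<forall>i\<in>{1..n}. integrable M (X i)) \<and>
     (\<forall>i. 1 \<le> i \<and> i < n \<longrightarrow>
        (\<forall>b\<in>Basis. AE \<omega> in M.
           real_cond_exp M (nat_filtr M X i) (\<lambda>\<omega>. X (Suc i) \<omega> \<bullet> b) \<omega> = X i \<omega> \<bullet> b))"

definition markov :: "'w measure \<Rightarrow> (nat \<Rightarrow> 'w \<Rightarrow> 'a::topological_space) \<Rightarrow> nat \<Rightarrow> bool" where
  "markov M X n \<longleftrightarrow>
     (\<forall>i. 1 \<le> i \<and> i < n \<longrightarrow>
        (\<forall>B\<in>sets borel. AE \<omega> in M.
           real_cond_exp M (nat_filtr M X i) (indicator (X (Suc i) -` B \<inter> space M)) \<omega> =
           real_cond_exp M (vimage_algebra (space M) (X i) borel) (indicator (X (Suc i) -` B \<inter> space M)) \<omega>))"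

end

theory Submission
  imports Defs
begin

lemma floor_double_diff:
  fixes y :: real
  shows "of_int \<lfloor>2*y\<rfloor> - 2 * of_int \<lfloor>y\<rfloor> \<in> {0::real, 1}"
proof -
  have a: "2 * \<lfloor>y\<rfloor> \<le> \<lfloor>2*y\<rfloor>" by (simp add: le_floor_iff)
  have b: "\<lfloor>2*y\<rfloor> < 2 * \<lfloor>y\<rfloor> + 2"
  proof -
    have "2*y < 2 * (of_int \<lfloor>y\<rfloor> + 1)" using real_of_int_floor_add_one_gt[of y] by (simp add: algebra_simps)
    then have "2*y < of_int (2 * \<lfloor>y\<rfloor> + 2)" by simp
    then show ?thesis by (simp add: floor_less_iff)
  qed
  from a b have "\<lfloor>2*y\<rfloor> - 2 * \<lfloor>y\<rfloor> \<in> {0, 1}" by auto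
  then show ?thesis by (auto simp flip: of_int_mult of_int_diff)
qed

definition bdig :: "nat \<Rightarrow> real \<Rightarrow> real" where
  "bdig k s = of_int \<lfloor>2^(Suc k) * s\<rfloor> - 2 * of_int \<lfloor>2^k * s\<rfloor>"

lemma bdig_01: "bdig k s \<in> {0, 1}"
  unfolding bdig_def using floor_double_diff[of "2^k * s"] by (simp add: mult.assoc)

lemma bdig_partial: "(\<Sum>k<m. bdig k s / 2^(Suc k)) = of_int \<lfloor>2^m * s\<rfloor> / 2^m - of_int \<lfloor>s\<rfloor>"
proof (induction m)
  case 0 then show ?case by simp
next
  case (Suc m)
  have "bdig m s / 2^(Suc m) = of_int \<lfloor>2^(Suc m) * s\<rfloor> / 2^(Suc m) - of_int \<lfloor>2^m * s\<rfloor> / 2^m"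
    unfolding bdig_def by (simp add: diff_divide_distrib)
  then show ?case using Suc by simp
qed

lemma bdig_sums:
  assumes "0 \<le> s" "s < 1"
  shows "(\<lambda>k. bdig k s / 2^(Suc k)) sums s"
proof -
  have fl: "\<lfloor>s\<rfloor> = 0" using assms by (simp add: floor_eq_iff)
  have "(\<lambda>m. of_int \<lfloor>2^m * s\<rfloor> / 2^m) \<longlonglongrightarrow> s"
  proof (rule LIMSEQ_I)
    fix r :: real assume r: "0 < r"
    obtain N where N: "(1/2::real)^N < r" using real_arch_pow_inv[OF r, of "1/2"] by auto
    show "\<exists>no. \<forall>m\<ge>no. norm (of_int \<lfloor>2^m * s\<rfloor> / 2^m - s) < r"
    proof (intro exI allI impI)
      fix m assume m: "N \<le> m"
      have p: "(0::real) < 2^m" by simp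
      have e: "of_int \<lfloor>2^m * s\<rfloor> / 2^m - s = - ((2^m * s - of_int \<lfloor>2^m * s\<rfloor>) / 2^m)"
        using p by (simp add: field_simps)
      have "0 \<le> (2^m * s - of_int \<lfloor>2^m * s\<rfloor>) / 2^m" using p by simp
      then have "norm (of_int \<lfloor>2^m * s\<rfloor> / 2^m - s) = (2^m * s - of_int \<lfloor>2^m * s\<rfloor>) / 2^m"
        unfolding e real_norm_def by simp
      also have "\<dots> < 1 / 2^m" using p
        by (intro divide_strict_right_mono) linarith+
      also have "\<dots> = (1/2)^m" by (simp add: power_divide)
      also have "\<dots> \<le> (1/2)^N" using m by (intro power_decreasing) auto
      finally show "norm (of_int \<lfloor>2^m * s\<rfloor> / 2^m - s) < r" using N by simp
    qed
  qed
  then show ?thesis unfolding sums_def bdig_partial fl by simp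
qed

definition qdig :: "nat \<Rightarrow> real \<Rightarrow> real" where
  "qdig k t = of_int \<lfloor>4^(Suc k) * t\<rfloor> - 4 * of_int \<lfloor>4^k * t\<rfloor>"

lemma summable_01_4:
  assumes "\<And>k. e k \<in> {0::real, 1}"
  shows "summable (\<lambda>j. e j / 4^(Suc j))"
proof (rule summable_comparison_test[of _ "\<lambda>j. (1/4::real)^(Suc j)"])
  show "\<exists>N. \<forall>n\<ge>N. norm (e n / 4 ^ Suc n) \<le> (1/4) ^ Suc n"
  proof (intro exI allI impI)
    fix n :: nat
    show "norm (e n / 4 ^ Suc n) \<le> (1/4) ^ Suc n"
      using assms[of n] by (cases "e n = 0") (auto simp: power_divide)
  qed
  show "summable (\<lambda>j. (1/4::real) ^ Suc j)" using summable_mult[OF summable_geometric[of "1/4::real"], of "1/4"] by simp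
qed

lemma qdig_enc:
  assumes e: "\<And>k. e k \<in> {0::real, 1}"
  shows "qdig k (\<Sum>j. e j / 4^(Suc j)) = e k"
proof -
  define T where "T k = (\<Sum>j. e (j+k) / 4^(Suc j))" for k
  define t where "t = (\<Sum>j. e j / 4^(Suc j))"
  have summ: "summable (\<lambda>j. e (j+k) / 4^(Suc j))" for k
    using summable_01_4[of "\<lambda>j. e (j+k)"] e by auto
  have geo: "(\<Sum>j. (1/4::real)^(Suc j)) = 1/3"
  proof -
    have "(\<Sum>j. (1/4::real)^(Suc j)) = (1/4) * (\<Sum>j. (1/4::real)^j)"
      by (subst suminf_mult[symmetric]) (auto simp: summable_geometric)
    also have "\<dots> = 1/3" by (subst suminf_geometric) auto
    finally show ?thesis .
  qed
  have Tb: "0 \<le> T k \<and> T k \<le> 1/3" for k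
  proof
    have "0 \<le> e (n+k) / 4^(Suc n)" for n using e[of "n+k"] by (cases "e (n+k) = 0") auto
    then show "0 \<le> T k" unfolding T_def by (intro suminf_nonneg summ)
    have "T k \<le> (\<Sum>j. (1/4::real)^(Suc j))" unfolding T_def
    proof (rule suminf_le)
      show "e (n+k) / 4^Suc n \<le> (1/4) ^ Suc n" for n
        using e[of "n+k"] by (cases "e (n+k) = 0") (auto simp: power_divide)
      show "summable (\<lambda>j. (1/4::real) ^ Suc j)" using summable_mult[OF summable_geometric[of "1/4::real"], of "1/4"] by simp
    qed (rule summ)
    then show "T k \<le> 1/3" using geo by simp
  qed
  have Tstep: "T k = e k / 4 + T (Suc k) / 4" for k
  proof -
    have "T k = e (0+k) / 4^(Suc 0) + (\<Sum>j. e (Suc j + k) / 4^(Suc (Suc j)))"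
      unfolding T_def using suminf_split_head[OF summ[of k]] by simp
    also have "(\<Sum>j. e (Suc j + k) / 4^(Suc (Suc j))) = (\<Sum>j. e (j + Suc k) / 4^(Suc j)) / 4"
      by (subst suminf_divide[OF summ, symmetric]) (simp add: field_simps)
    finally show ?thesis unfolding T_def by simp
  qed
  have T0: "T 0 = t" unfolding T_def t_def by simp
  have int: "4^k * t - T k \<in> \<int>" for k
  proof (induction k)
    case 0 then show ?case using T0 by simp
  next
    case (Suc k)
    have eq: "4^(Suc k) * t - T (Suc k) = 4 * (4^k * t - T k) + e k"
      using Tstep[of k] by (simp add: field_simps)
    have "e k \<in> \<int>" using e[of k] by auto
    then have "4 * (4^k * t - T k) + e k \<in> \<int>" using Suc.IH by (intro Ints_add Ints_mult) auto
    then show ?case by (subst eq)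
  qed
  have fl: "of_int \<lfloor>4^k * t\<rfloor> = 4^k * t - T k" for k
  proof -
    obtain z where z: "4^k * t - T k = of_int z" using int[of k] by (auto elim: Ints_cases)
    have "\<lfloor>4^k * t\<rfloor> = z" using Tb[of k] z by (intro floor_unique) auto
    then show ?thesis using z by simp
  qed
  have "qdig k t = 4 * T k - T (Suc k)" unfolding qdig_def fl by (simp add: field_simps)
  also have "\<dots> = e k" using Tstep[of k] by simp
  finally show ?thesis unfolding t_def .
qed

lemma geo4: "(\<lambda>j. (1/4::real)^(Suc j)) sums (1/3)"
proof -
  have "(\<lambda>j. (1/4) * (1/4::real)^j) sums ((1/4) * (1 / (1 - 1/4)))"
    by (intro sums_mult geometric_sums) simp
  then show ?thesis by simp
qed

definition sq :: "real \<Rightarrow> real" where "sq c = (1 + c / (1 + \<bar>c\<bar>)) / 2"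
definition unsq :: "real \<Rightarrow> real" where "unsq x = (2 * x - 1) / (1 - \<bar>2 * x - 1\<bar>)"

lemma sq_bounds: "0 < sq c \<and> sq c < 1"
proof -
  have p: "0 < 1 + \<bar>c\<bar>" by simp
  have "c < 1 * (1 + \<bar>c\<bar>)" by simp
  then have u: "c / (1 + \<bar>c\<bar>) < 1" by (subst pos_divide_less_eq[OF p])
  have "-1 * (1 + \<bar>c\<bar>) < c" by simp
  then have l: "-1 < c / (1 + \<bar>c\<bar>)" by (subst pos_less_divide_eq[OF p])
  have g: "\<And>w::real. -1 < w \<Longrightarrow> w < 1 \<Longrightarrow> 0 < (1+w)/2 \<and> (1+w)/2 < 1" by auto
  show ?thesis unfolding sq_def using g[OF l u] .
qed

lemma unsq_sq: "unsq (sq c) = c"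
proof -
  have p: "0 < 1 + \<bar>c\<bar>" by simp
  have g: "\<And>w::real. 2 * ((1 + w) / 2) - 1 = w" by (simp add: field_simps)
  have a: "2 * sq c - 1 = c / (1 + \<bar>c\<bar>)" unfolding sq_def by (rule g)
  have b: "\<bar>c / (1 + \<bar>c\<bar>)\<bar> = \<bar>c\<bar> / (1 + \<bar>c\<bar>)" using p by (simp only: abs_divide)
  have c: "1 - \<bar>c\<bar> / (1 + \<bar>c\<bar>) = 1 / (1 + \<bar>c\<bar>)" using p by (simp add: field_simps)
  have "unsq (sq c) = (c / (1 + \<bar>c\<bar>)) / (1 / (1 + \<bar>c\<bar>))" unfolding unsq_def a b c ..
  also have "\<dots> = c" using p by simp
  finally show ?thesis .
qed

definition enc :: "'a::euclidean_space list \<Rightarrow> 'a \<Rightarrow> nat \<Rightarrow> real" where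
  "enc bs a k = bdig (k div length bs) (sq (a \<bullet> bs ! (k mod length bs)))"

definition emb :: "'a::euclidean_space list \<Rightarrow> 'a \<Rightarrow> real" where
  "emb bs a = (\<Sum>k. enc bs a k / 4^(Suc k))"

definition dec :: "'a::euclidean_space list \<Rightarrow> nat \<Rightarrow> real \<Rightarrow> real" where
  "dec bs j t = (\<Sum>m. qdig (m * length bs + j) t / 2^(Suc m))"

definition unemb :: "'a::euclidean_space list \<Rightarrow> real \<Rightarrow> 'a" where
  "unemb bs t = (\<Sum>j<length bs. unsq (dec bs j t) *\<^sub>R bs ! j)"

lemma enc_01: "enc bs a k \<in> {0, 1}" unfolding enc_def by (rule bdig_01)

lemma emb_bounds: "0 \<le> emb bs a \<and> emb bs a \<le> 1"
proof -
  have summ: "summable (\<lambda>k. enc bs a k / 4^(Suc k))" by (rule summable_01_4[OF enc_01])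
  have nn: "0 \<le> enc bs a k / 4^(Suc k)" for k using enc_01[of bs a k] by (cases "enc bs a k = 0") auto
  have le: "enc bs a k / 4^(Suc k) \<le> (1/4::real)^(Suc k)" for k
    using enc_01[of bs a k] by (cases "enc bs a k = 0") (auto simp: power_divide)
  have "emb bs a \<le> 1/3" unfolding emb_def
    using suminf_le[OF le summ] geo4 by (simp add: sums_iff)
  moreover have "0 \<le> emb bs a" unfolding emb_def by (intro suminf_nonneg summ nn)
  ultimately show ?thesis by simp
qed


lemma unemb_emb:
  assumes bs: "distinct bs" "set bs = (Basis :: 'a::euclidean_space set)"
  shows "unemb bs (emb bs a) = a"
proof -
  define d where "d = length bs"
  have dpos: "0 < d" unfolding d_def using bs nonempty_Basis by (cases bs) (auto simp: eq_commute[of "{}"])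
  have q: "qdig k (emb bs a) = enc bs a k" for k unfolding emb_def by (rule qdig_enc[OF enc_01])
  have dj: "dec bs j (emb bs a) = sq (a \<bullet> bs!j)" if j: "j < d" for j
  proof -
    have "qdig (m*d + j) (emb bs a) = bdig m (sq (a \<bullet> bs!j))" for m
    proof -
      have "(m*d + j) div d = m" using j by simp
      moreover have "(m*d + j) mod d = j" using j by simp
      ultimately show ?thesis unfolding q enc_def d_def[symmetric] by simp
    qed
    then have "dec bs j (emb bs a) = (\<Sum>m. bdig m (sq (a \<bullet> bs!j)) / 2^(Suc m))"
      unfolding dec_def d_def[symmetric] by simp
    also have "\<dots> = sq (a \<bullet> bs!j)"
      using bdig_sums[of "sq (a \<bullet> bs!j)"] sq_bounds[of "a \<bullet> bs!j"] by (simp add: sums_iff)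
    finally show ?thesis .
  qed
  have "unemb bs (emb bs a) = (\<Sum>j<d. (a \<bullet> bs!j) *\<^sub>R bs!j)"
    unfolding unemb_def d_def[symmetric] using dj unsq_sq by (intro sum.cong) auto
  also have "\<dots> = (\<Sum>b\<in>Basis. (a \<bullet> b) *\<^sub>R b)"
    using sum.reindex_bij_betw[OF bij_betw_nth[OF bs(1) refl bs(2)[symmetric]], of "\<lambda>b. (a \<bullet> b) *\<^sub>R b"]
    unfolding d_def by simp
  also have "\<dots> = a" by (rule euclidean_representation)
  finally show ?thesis .
qed

lemma borel_measurable_floor_comp[measurable (raw)]:
  "f \<in> borel_measurable M \<Longrightarrow> (\<lambda>x. real_of_int \<lfloor>f x :: real\<rfloor>) \<in> borel_measurable M"
  using measurable_compose[OF _ borel_measurable_real_floor] by (simp add: comp_def)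

lemma emb_measurable: "emb bs \<in> borel_measurable borel"
  unfolding emb_def[abs_def] enc_def bdig_def sq_def by measurable

lemma unemb_measurable: "unemb bs \<in> borel_measurable borel"
  unfolding unemb_def[abs_def] dec_def qdig_def unsq_def by measurable

lemma embedding_exists:
  "\<exists>(\<phi> :: 'a::euclidean_space \<Rightarrow> real) \<psi>. \<phi> \<in> borel_measurable borel \<and> \<psi> \<in> borel_measurable borel \<and>
     (\<forall>a. 0 \<le> \<phi> a \<and> \<phi> a \<le> 1) \<and> (\<forall>a. \<psi> (\<phi> a) = a)"
proof -
  obtain bs where bs: "distinct bs" "set bs = (Basis :: 'a set)"
    using finite_distinct_list[OF finite_Basis] by metis
  show ?thesis
    by (rule exI[of _ "emb bs"], rule exI[of _ "unemb bs"])
       (use emb_measurable unemb_measurable emb_bounds unemb_emb[OF bs] in auto)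
qed

lemma borel_rat_atMost:
  "sets (borel :: real measure) = sigma_sets UNIV (range (\<lambda>q::rat. {..real_of_rat q}))"
proof
  show "sigma_sets UNIV (range (\<lambda>q::rat. {..real_of_rat q})) \<subseteq> sets borel"
    using sets.sigma_sets_subset[of "range (\<lambda>q::rat. {..real_of_rat q})" borel] by (auto intro: borel_closed)
next
  have "sets (borel :: real measure) = sigma_sets UNIV (range atMost)"
    by (subst borel_eq_atMost) simp
  also have "\<dots> \<subseteq> sigma_sets UNIV (range (\<lambda>q::rat. {..real_of_rat q}))"
  proof (rule sigma_sets_mono, safe)
    fix t :: real
    have "\<exists>q::rat. t < of_rat q \<and> of_rat q < t + 1 / real (Suc m)" for m
      by (rule of_rat_dense) simp
    then obtain r :: "nat \<Rightarrow> rat" where r: "\<And>m. t < of_rat (r m) \<and> of_rat (r m) < t + 1 / real (Suc m)"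
      by metis
    have "{..t} = (\<Inter>m. {..real_of_rat (r m)})"
    proof (intro set_eqI iffI)
      fix x assume "x \<in> {..t}" then show "x \<in> (\<Inter>m. {..real_of_rat (r m)})" using r by (auto intro: order_trans less_imp_le)
    next
      fix x assume x: "x \<in> (\<Inter>m. {..real_of_rat (r m)})"
      show "x \<in> {..t}"
      proof (rule ccontr)
        assume "x \<notin> {..t}"
        then have "0 < x - t" by simp
        then obtain m where m: "inverse (real (Suc m)) < x - t" using reals_Archimedean by blast
        have "x \<le> real_of_rat (r m)" using x by auto
        then show False using m r[of m] by (simp add: inverse_eq_divide)
      qed
    qed
    also have "\<dots> \<in> sigma_sets UNIV (range (\<lambda>q::rat. {..real_of_rat q}))"
      by (intro sigma_sets_Inter) auto
    finally show "{..t} \<in> sigma_sets UNIV (range (\<lambda>q::rat. {..real_of_rat q}))" .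
  qed
  finally show "sets (borel :: real measure) \<subseteq> sigma_sets UNIV (range (\<lambda>q::rat. {..real_of_rat q}))" .
qed

lemma Int_stable_rat_atMost: "Int_stable (range (\<lambda>q::rat. {..real_of_rat q}))"
proof (rule Int_stableI, safe)
  fix q r :: rat
  have "{..real_of_rat q} \<inter> {..real_of_rat r} = {..real_of_rat (min q r)}"
    by (auto simp: of_rat_less_eq min_def)
  then show "{..real_of_rat q} \<inter> {..real_of_rat r} \<in> range (\<lambda>q::rat. {..real_of_rat q})" by blast
qed

lemma disint:
  fixes M :: "'w measure" and S :: "'s measure" and W :: "'w \<Rightarrow> 's" and T :: "'w \<Rightarrow> real"
  assumes P: "prob_space M" and W[measurable]: "W \<in> M \<rightarrow>\<^sub>M S" and T[measurable]: "T \<in> borel_measurable M"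
    and Tb: "\<And>\<omega>. \<omega> \<in> space M \<Longrightarrow> 0 \<le> T \<omega> \<and> T \<omega> \<le> 1"
  shows "\<exists>\<kappa> \<in> S \<rightarrow>\<^sub>M prob_algebra borel. \<forall>A\<in>sets S. \<forall>B\<in>sets borel.
      emeasure M {\<omega>\<in>space M. W \<omega> \<in> A \<and> T \<omega> \<in> B} = (\<integral>\<^sup>+x. indicator A x * emeasure (\<kappa> x) B \<partial>distr M S W)"
proof -
  interpret prob_space M by (rule P)
  define \<mu> where "\<mu> = distr M S W"
  have P\<mu>: "prob_space \<mu>" unfolding \<mu>_def by (rule prob_space_distr) simp
  interpret mu: prob_space \<mu> by (rule P\<mu>)
  have sets_mu[simp, measurable_cong]: "sets \<mu> = sets S" unfolding \<mu>_def by simp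
  have space_mu[simp]: "space \<mu> = space S" unfolding \<mu>_def by simp
  have emu: "emeasure \<mu> A = emeasure M {\<omega>\<in>space M. W \<omega> \<in> A}" if "A \<in> sets S" for A
    unfolding \<mu>_def using that by (subst emeasure_distr) (auto intro!: arg_cong2[where f=emeasure])
  define P2 where "P2 A B = emeasure M {\<omega>\<in>space M. W \<omega> \<in> A \<and> T \<omega> \<in> B}" for A B
  define \<nu> where "\<nu> B = distr (density M (\<lambda>\<omega>. indicator B (T \<omega>))) S W" for B :: "real set"
  have e\<nu>: "emeasure (\<nu> B) A = P2 A B" if "A \<in> sets S" "B \<in> sets borel" for A B
  proof -
    have "emeasure (\<nu> B) A = emeasure (density M (\<lambda>\<omega>. indicator B (T \<omega>))) (W -` A \<inter> space M)"
      unfolding \<nu>_def using that by (subst emeasure_distr) auto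
    also have "\<dots> = (\<integral>\<^sup>+\<omega>. indicator B (T \<omega>) * indicator (W -` A \<inter> space M) \<omega> \<partial>M)"
      using that by (subst emeasure_density) auto
    also have "\<dots> = (\<integral>\<^sup>+\<omega>. indicator {\<omega>\<in>space M. W \<omega> \<in> A \<and> T \<omega> \<in> B} \<omega> \<partial>M)"
      by (intro nn_integral_cong) (auto split: split_indicator)
    also have "\<dots> = P2 A B" unfolding P2_def using that by (subst nn_integral_indicator) auto
    finally show ?thesis .
  qed
  have sets_nu[simp]: "sets (\<nu> B) = sets \<mu>" for B unfolding \<nu>_def by simp
  have ac: "absolutely_continuous \<mu> (\<nu> B)" if "B \<in> sets borel" for B
  proof (unfold absolutely_continuous_def, safe)
    fix A assume "A \<in> null_sets \<mu>"
    then have A1: "A \<in> sets S" by (auto simp: null_sets_def)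
    have A: "A \<in> sets S" "emeasure M {\<omega>\<in>space M. W \<omega> \<in> A} = 0"
      using A1 emu[OF A1] \<open>A \<in> null_sets \<mu>\<close> by (auto simp: null_sets_def)
    have "P2 A B \<le> emeasure M {\<omega>\<in>space M. W \<omega> \<in> A}" unfolding P2_def using that A by (intro emeasure_mono) auto
    then show "A \<in> null_sets (\<nu> B)" using A e\<nu>[OF A(1) that] by auto
  qed
  define h where "h B = RN_deriv \<mu> (\<nu> B)" for B
  have h_meas[measurable]: "h B \<in> borel_measurable S" for B
    unfolding h_def using borel_measurable_RN_deriv[of \<mu> "\<nu> B"] unfolding measurable_cong_sets[OF sets_mu refl] .
  have hB: "(\<integral>\<^sup>+x. h B x * indicator A x \<partial>\<mu>) = P2 A B" if "A \<in> sets S" "B \<in> sets borel" for A B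
  proof -
    have "density \<mu> (h B) = \<nu> B" unfolding h_def by (rule mu.density_RN_deriv[OF ac[OF that(2)]]) simp
    then have "emeasure (density \<mu> (h B)) A = P2 A B" using e\<nu>[OF that] by simp
    then show ?thesis using that by (subst (asm) emeasure_density) auto
  qed
  have P2_add: "P2 A (B1 \<union> B2) = P2 A B1 + P2 A B2"
    if "A \<in> sets S" "B1 \<in> sets borel" "B2 \<in> sets borel" "B1 \<inter> B2 = {}" for A B1 B2
  proof -
    have "{\<omega>\<in>space M. W \<omega> \<in> A \<and> T \<omega> \<in> B1 \<union> B2} =
          {\<omega>\<in>space M. W \<omega> \<in> A \<and> T \<omega> \<in> B1} \<union> {\<omega>\<in>space M. W \<omega> \<in> A \<and> T \<omega> \<in> B2}" by auto
    then show ?thesis unfolding P2_def using that by (subst plus_emeasure) auto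
  qed
  have h_add: "AE x in \<mu>. h (B1 \<union> B2) x = h B1 x + h B2 x"
    if B: "B1 \<in> sets borel" "B2 \<in> sets borel" "B1 \<inter> B2 = {}" for B1 B2
  proof (rule mu.density_unique2)
    fix A assume A: "A \<in> sets \<mu>"
    then have A': "A \<in> sets S" by simp
    have "(\<integral>\<^sup>+x\<in>A. h (B1 \<union> B2) x \<partial>\<mu>) = P2 A B1 + P2 A B2" using hB[OF A'] P2_add[OF A' B] B by auto
    also have "\<dots> = (\<integral>\<^sup>+x\<in>A. h B1 x \<partial>\<mu>) + (\<integral>\<^sup>+x\<in>A. h B2 x \<partial>\<mu>)" using hB[OF A'] B by simp
    also have "\<dots> = (\<integral>\<^sup>+x\<in>A. (h B1 x + h B2 x) \<partial>\<mu>)"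
      using A' by (subst nn_integral_add[symmetric]) (auto simp: distrib_right)
    finally show "(\<integral>\<^sup>+x\<in>A. h (B1 \<union> B2) x \<partial>\<mu>) = (\<integral>\<^sup>+x\<in>A. (h B1 x + h B2 x) \<partial>\<mu>)" .
  qed simp_all
  define H where "H q = h {..real_of_rat q}" for q :: rat
  have H_meas[measurable]: "H q \<in> borel_measurable S" for q unfolding H_def by simp
  have HB: "(\<integral>\<^sup>+x. H q x * indicator A x \<partial>\<mu>) = P2 A {..real_of_rat q}" if "A \<in> sets S" for A q
    unfolding H_def using hB[OF that] by simp
  have H_mono: "AE x in \<mu>. H q x \<le> H r x" if "q \<le> r" for q r
  proof -
    have e: "{..real_of_rat r} = {..real_of_rat q} \<union> {real_of_rat q<..real_of_rat r}"
    proof -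
      have "real_of_rat q \<le> real_of_rat r" using that by (simp add: of_rat_less_eq)
      then show ?thesis by auto
    qed
    have "AE x in \<mu>. H r x = H q x + h {real_of_rat q<..real_of_rat r} x"
      unfolding H_def e by (rule h_add) auto
    then show ?thesis by eventually_elim simp
  qed
  have H_zero: "AE x in \<mu>. H q x = 0" if "q < 0" for q
  proof (rule mu.density_unique2)
    fix A assume A: "A \<in> sets \<mu>"
    then have A': "A \<in> sets S" by simp
    have qq: "real_of_rat q < 0" using that by simp
    have e: "{\<omega>\<in>space M. W \<omega> \<in> A \<and> T \<omega> \<in> {..real_of_rat q}} = {}"
    proof (intro equalityI subsetI)
      fix \<omega> assume "\<omega> \<in> {\<omega>\<in>space M. W \<omega> \<in> A \<and> T \<omega> \<in> {..real_of_rat q}}"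
      then have "\<omega> \<in> space M" "T \<omega> \<le> real_of_rat q" by auto
      with Tb[of \<omega>] qq have False by linarith
      then show "\<omega> \<in> {}" by simp
    qed simp
    have "P2 A {..real_of_rat q} = 0" unfolding P2_def by (subst e) simp
    then show "(\<integral>\<^sup>+x\<in>A. H q x \<partial>\<mu>) = (\<integral>\<^sup>+x\<in>A. 0 \<partial>\<mu>)" using HB[OF A'] by simp
  qed simp_all
  have H_one: "AE x in \<mu>. H q x = 1" if "1 \<le> q" for q
  proof (rule mu.density_unique2)
    fix A assume A: "A \<in> sets \<mu>"
    then have A': "A \<in> sets S" by simp
    have qq: "1 \<le> real_of_rat q" using that by (metis of_rat_1 of_rat_less_eq)
    have e: "{\<omega>\<in>space M. W \<omega> \<in> A \<and> T \<omega> \<in> {..real_of_rat q}} = {\<omega>\<in>space M. W \<omega> \<in> A}"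
    proof (intro equalityI subsetI)
      fix \<omega> assume w: "\<omega> \<in> {\<omega>\<in>space M. W \<omega> \<in> A}"
      then have "\<omega> \<in> space M" by simp
      with Tb[of \<omega>] qq have "T \<omega> \<le> real_of_rat q" by linarith
      then show "\<omega> \<in> {\<omega>\<in>space M. W \<omega> \<in> A \<and> T \<omega> \<in> {..real_of_rat q}}" using w by simp
    qed auto
    have "P2 A {..real_of_rat q} = emeasure \<mu> A" unfolding P2_def by (subst e) (simp add: emu[OF A'])
    then show "(\<integral>\<^sup>+x\<in>A. H q x \<partial>\<mu>) = (\<integral>\<^sup>+x\<in>A. 1 \<partial>\<mu>)"
      using HB[OF A'] A by (simp add: nn_integral_indicator)
  qed simp_all
  define s where "s q m = q + 1 / of_nat (Suc m)" for q :: rat and m :: nat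
  have s_real: "real_of_rat (s q m) = real_of_rat q + 1 / real (Suc m)" for q m
    unfolding s_def by (simp add: of_rat_add of_rat_divide)
  have s_gt: "q < s q m" for q m unfolding s_def by simp
  have s_dec: "s q (Suc m) \<le> s q m" for q m unfolding s_def by (simp add: frac_le)
  have H_rc: "AE x in \<mu>. H q x = (INF m. H (s q m) x)" for q
  proof (rule mu.density_unique2)
    fix A assume A: "A \<in> sets \<mu>"
    then have A': "A \<in> sets S" by simp
    have "(\<integral>\<^sup>+x\<in>A. (INF m. H (s q m) x) \<partial>\<mu>) = (\<integral>\<^sup>+x. (INF m. H (s q m) x * indicator A x) \<partial>\<mu>)"
      by (intro nn_integral_cong) (simp split: split_indicator)
    also have "\<dots> = (INF m. (\<integral>\<^sup>+x. H (s q m) x * indicator A x \<partial>\<mu>))"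
    proof (rule nn_integral_monotone_convergence_INF_AE')
      show "AE x in \<mu>. H (s q (Suc m)) x * indicator A x \<le> H (s q m) x * indicator A x" for m
        using H_mono[OF s_dec[of q m]] by eventually_elim (simp add: mult_right_mono)
      show "(\<integral>\<^sup>+x. H (s q 0) x * indicator A x \<partial>\<mu>) < \<infinity>"
        using HB[OF A'] unfolding P2_def by (simp add: emeasure_finite less_top[symmetric])
    qed (use A in simp)
    also have "\<dots> = (INF m. P2 A {..real_of_rat (s q m)})" using HB[OF A'] by simp
    also have "\<dots> = P2 A {..real_of_rat q}"
    proof -
      define E where "E m = {\<omega>\<in>space M. W \<omega> \<in> A \<and> T \<omega> \<in> {..real_of_rat (s q m)}}" for m
      have "(INF m. emeasure M (E m)) = emeasure M (\<Inter>m. E m)"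
      proof (rule INF_emeasure_decseq')
        show "E m \<in> sets M" for m unfolding E_def using A' by measurable
        show "decseq E" unfolding E_def
        proof (rule decseq_SucI)
          fix m
          have "real_of_rat (s q (Suc m)) \<le> real_of_rat (s q m)" using s_dec by (simp add: of_rat_less_eq)
          then show "{\<omega>\<in>space M. W \<omega> \<in> A \<and> T \<omega> \<in> {..real_of_rat (s q (Suc m))}}
                     \<subseteq> {\<omega>\<in>space M. W \<omega> \<in> A \<and> T \<omega> \<in> {..real_of_rat (s q m)}}" by auto
        qed
      qed (simp add: emeasure_finite)
      also have "(\<Inter>m. E m) = {\<omega>\<in>space M. W \<omega> \<in> A \<and> T \<omega> \<in> {..real_of_rat q}}"
      proof (intro set_eqI iffI)
        fix \<omega> assume w: "\<omega> \<in> (\<Inter>m. E m)"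
        have "T \<omega> \<le> real_of_rat q"
        proof (rule ccontr)
          assume "\<not> T \<omega> \<le> real_of_rat q"
          then have "0 < T \<omega> - real_of_rat q" by simp
          then obtain m where m: "inverse (real (Suc m)) < T \<omega> - real_of_rat q" using reals_Archimedean by blast
          have "T \<omega> \<le> real_of_rat (s q m)" using w unfolding E_def by auto
          then show False using m s_real[of q m] by (simp add: inverse_eq_divide)
        qed
        then show "\<omega> \<in> {\<omega>\<in>space M. W \<omega> \<in> A \<and> T \<omega> \<in> {..real_of_rat q}}" using w unfolding E_def by auto
      next
        fix \<omega> assume w: "\<omega> \<in> {\<omega>\<in>space M. W \<omega> \<in> A \<and> T \<omega> \<in> {..real_of_rat q}}"
        have "real_of_rat q \<le> real_of_rat (s q m)" for m using s_gt[of q m] by (simp add: of_rat_less_eq)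
        then show "\<omega> \<in> (\<Inter>m. E m)" using w unfolding E_def by (auto intro: order_trans)
      qed
      finally show ?thesis unfolding P2_def E_def by simp
    qed
    also have "\<dots> = (\<integral>\<^sup>+x\<in>A. H q x \<partial>\<mu>)" using HB[OF A'] by simp
    finally show "(\<integral>\<^sup>+x\<in>A. H q x \<partial>\<mu>) = (\<integral>\<^sup>+x\<in>A. (INF m. H (s q m) x) \<partial>\<mu>)" by simp
  qed simp_all
  define G where "G = {x\<in>space S. (\<forall>q r. q \<le> r \<longrightarrow> H q x \<le> H r x) \<and> (\<forall>q. q < 0 \<longrightarrow> H q x = 0) \<and>
     (\<forall>q. 1 \<le> q \<longrightarrow> H q x = 1) \<and> (\<forall>q. H q x = (INF m. H (s q m) x))}"
  have G_sets[measurable]: "G \<in> sets S" unfolding G_def by measurable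
  have AE_G: "AE x in \<mu>. x \<in> G"
  proof -
    have a1: "AE x in \<mu>. \<forall>q r. q \<le> r \<longrightarrow> H q x \<le> H r x"
    proof (subst AE_all_countable, intro allI, subst AE_all_countable, intro allI)
      fix q r :: rat show "AE x in \<mu>. q \<le> r \<longrightarrow> H q x \<le> H r x"
      proof (cases "q \<le> r")
        case True then show ?thesis using H_mono[OF True] by eventually_elim simp
      qed simp
    qed
    have a2: "AE x in \<mu>. \<forall>q. q < 0 \<longrightarrow> H q x = 0"
    proof (subst AE_all_countable, intro allI)
      fix q :: rat show "AE x in \<mu>. q < 0 \<longrightarrow> H q x = 0"
      proof (cases "q < 0")
        case True then show ?thesis using H_zero[OF True] by eventually_elim simp
      qed simp
    qed
    have a3: "AE x in \<mu>. \<forall>q. 1 \<le> q \<longrightarrow> H q x = 1"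
    proof (subst AE_all_countable, intro allI)
      fix q :: rat show "AE x in \<mu>. 1 \<le> q \<longrightarrow> H q x = 1"
      proof (cases "1 \<le> q")
        case True then show ?thesis using H_one[OF True] by eventually_elim simp
      qed simp
    qed
    have a4: "AE x in \<mu>. \<forall>q. H q x = (INF m. H (s q m) x)"
      by (subst AE_all_countable) (intro allI H_rc)
    have a5: "AE x in \<mu>. x \<in> space S" by (rule AE_I2) simp
    from a1 a2 a3 a4 a5 show ?thesis unfolding G_def mem_Collect_eq by eventually_elim blast
  qed
  define Q where "Q x u = Inf ({real_of_rat q | q. 0 \<le> q \<and> ennreal u \<le> H q x} \<union> {1})" for x u
  have Q_mono: "mono (Q x)" for x
  proof (rule monoI)
    fix u u' :: real assume uu: "u \<le> u'"
    show "Q x u \<le> Q x u'" unfolding Q_def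
    proof (rule cInf_superset_mono)
      show "bdd_below ({real_of_rat q | q. 0 \<le> q \<and> ennreal u \<le> H q x} \<union> {1})"
        by (rule bdd_belowI[of _ 0]) (auto simp: zero_le_of_rat_iff)
      show "{real_of_rat q | q. 0 \<le> q \<and> ennreal u' \<le> H q x} \<union> {1} \<subseteq> {real_of_rat q | q. 0 \<le> q \<and> ennreal u \<le> H q x} \<union> {1}"
        using uu by (auto intro: order_trans[OF ennreal_leI])
    qed simp
  qed
  have Q_meas[measurable]: "Q x \<in> borel_measurable borel" for x by (rule borel_measurable_mono[OF Q_mono])
  define U where "U = uniform_measure lborel {0<..1::real}"
  have PU: "prob_space U" unfolding U_def by (rule prob_space_uniform_measure) auto
  have sets_U[simp]: "sets U = sets borel" unfolding U_def by simp
  have space_U[simp]: "space U = UNIV" unfolding U_def by simp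
  have eU: "emeasure U X = emeasure lborel ({0<..1} \<inter> X)" if "X \<in> sets borel" for X
    unfolding U_def using that by (simp add: emeasure_uniform_measure divide_ennreal_def)
  have QU: "Q x \<in> measurable U borel" for x using Q_meas unfolding measurable_cong_sets[OF sets_U refl] .
  define \<kappa> where "\<kappa> x = (if x \<in> G then distr U borel (Q x) else return borel 0)" for x
  have key: "emeasure (\<kappa> x) {..real_of_rat t} = H t x" if x: "x \<in> G" for x t
  proof -
    have Gm: "\<And>q r. q \<le> r \<Longrightarrow> H q x \<le> H r x" using x unfolding G_def by blast
    have G0: "\<And>q. q < 0 \<Longrightarrow> H q x = 0" using x unfolding G_def by blast
    have G1: "\<And>q. 1 \<le> q \<Longrightarrow> H q x = 1" using x unfolding G_def by blast
    have Grc: "H t x = (INF m. H (s t m) x)" using x unfolding G_def by blast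
    have Hle1: "H q x \<le> 1" for q using Gm[of q "max q 1"] G1[of "max q 1"] by simp
    define hv where "hv = enn2real (H t x)"
    have hv: "H t x = ennreal hv" "0 \<le> hv" "hv \<le> 1"
      using Hle1[of t] unfolding hv_def by (auto simp: ennreal_enn2real_if enn2real_leI top_unique)
    have iff: "Q x u \<le> real_of_rat t \<longleftrightarrow> u \<le> hv" if u: "0 < u" "u \<le> 1" for u
    proof -
      define Su where "Su = {real_of_rat q | q. 0 \<le> q \<and> ennreal u \<le> H q x} \<union> {1}"
      have Qu: "Q x u = Inf Su" unfolding Q_def Su_def ..
      have bdd: "bdd_below Su" unfolding Su_def
        by (rule bdd_belowI[of _ 0]) (auto simp: zero_le_of_rat_iff)
      have ne: "Su \<noteq> {}" unfolding Su_def by simp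
      have pos_q: "0 \<le> q" if "ennreal u \<le> H q x" for q
      proof (rule ccontr)
        assume "\<not> 0 \<le> q"
        then have "H q x = 0" using G0 by simp
        then show False using that u by simp
      qed
      show ?thesis
      proof
        assume le: "Q x u \<le> real_of_rat t"
        have "ennreal u \<le> H (s t m) x" for m
        proof -
          have "real_of_rat t < real_of_rat (s t m)" using s_gt[of t m] by (simp add: of_rat_less)
          then have "Inf Su < real_of_rat (s t m)" using le Qu by simp
          then obtain y where y: "y \<in> Su" "y < real_of_rat (s t m)" using cInf_lessD[OF ne] by blast
          show ?thesis
          proof (cases "y = 1")
            case True
            then have "1 \<le> s t m" using y(2) by (metis less_imp_le of_rat_1 of_rat_less_eq)
            then show ?thesis using G1 u by simp
          next
            case False
            then obtain q where q: "y = real_of_rat q" "ennreal u \<le> H q x" using y(1) unfolding Su_def by blast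
            have "q \<le> s t m" using y(2) q(1) by (simp add: of_rat_less less_imp_le)
            then show ?thesis using Gm q(2) order_trans by blast
          qed
        qed
        then have "ennreal u \<le> H t x" unfolding Grc by (rule INF_greatest)
        then show "u \<le> hv" using hv by simp
      next
        assume le: "u \<le> hv"
        then have uH: "ennreal u \<le> H t x" using hv by simp
        show "Q x u \<le> real_of_rat t"
        proof (rule ccontr)
          assume "\<not> Q x u \<le> real_of_rat t"
          then have "real_of_rat t < Inf Su" using Qu by simp
          then obtain r :: rat where r: "real_of_rat t < real_of_rat r" "real_of_rat r < Inf Su"
            using of_rat_dense by blast
          have "t \<le> r" using r(1) by (simp add: of_rat_less)
          then have "ennreal u \<le> H r x" using uH Gm order_trans by blast
          then have "real_of_rat r \<in> Su" unfolding Su_def using pos_q by blast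
          then have "Inf Su \<le> real_of_rat r" using bdd by (rule cInf_lower)
          then show False using r(2) by simp
        qed
      qed
    qed
    have "emeasure (\<kappa> x) {..real_of_rat t} = emeasure U (Q x -` {..real_of_rat t})"
      unfolding \<kappa>_def using x emeasure_distr[OF QU, of "{..real_of_rat t}" x] by simp
    also have "\<dots> = emeasure lborel ({0<..1} \<inter> Q x -` {..real_of_rat t})"
      by (rule eU) (use measurable_sets[OF Q_meas[of x], of "{..real_of_rat t}"] in simp)
    also have "{0<..1} \<inter> Q x -` {..real_of_rat t} = {0<..hv}"
      using iff hv by auto
    also have "emeasure lborel {0<..hv} = H t x" using hv by simp
    finally show ?thesis .
  qed
  have kprob: "prob_space (\<kappa> x)" for x
  proof (cases "x \<in> G")
    case True
    then show ?thesis unfolding \<kappa>_def using prob_space.prob_space_distr[OF PU QU] by simp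
  next
    case False
    then show ?thesis unfolding \<kappa>_def by (simp add: prob_space_return)
  qed
  have ksets[simp]: "sets (\<kappa> x) = sets borel" for x unfolding \<kappa>_def by simp
  have kmeas: "\<kappa> \<in> S \<rightarrow>\<^sub>M prob_algebra borel"
  proof (rule measurable_prob_algebra_generated[OF borel_rat_atMost Int_stable_rat_atMost])
    show "prob_space (\<kappa> a)" for a by (rule kprob)
    show "sets (\<kappa> a) = sets borel" for a by simp
    fix A assume "A \<in> range (\<lambda>q::rat. {..real_of_rat q})"
    then obtain q where q: "A = {..real_of_rat q}" by blast
    have "(\<lambda>x. if x \<in> G then H q x else indicator {..real_of_rat q} (0::real)) \<in> borel_measurable S"
      by measurable
    moreover have "emeasure (\<kappa> x) A = (if x \<in> G then H q x else indicator {..real_of_rat q} (0::real))" for x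
      unfolding q using key[of x q] by (auto simp: \<kappa>_def emeasure_return)
    ultimately show "(\<lambda>x. emeasure (\<kappa> x) A) \<in> borel_measurable S" by simp
  qed auto
  have Sne: "space S \<noteq> {}" using mu.not_empty by simp
  have kX: "(\<lambda>x. emeasure (\<kappa> x) X) \<in> borel_measurable S" if "X \<in> sets borel" for X
    using measurable_compose[OF measurable_prob_algebraD[OF kmeas] measurable_emeasure_subprob_algebra[of X borel]] that by simp
  have final: "P2 A B = (\<integral>\<^sup>+x. indicator A x * emeasure (\<kappa> x) B \<partial>\<mu>)" if A: "A \<in> sets S" and B: "B \<in> sets borel" for A B
  proof -
    define L where "L = distr (density M (\<lambda>\<omega>. indicator A (W \<omega>))) borel T"
    define R where "R = density \<mu> (indicator A) \<bind> \<kappa>"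
    have kd: "\<kappa> \<in> density \<mu> (indicator A) \<rightarrow>\<^sub>M subprob_algebra borel"
      using measurable_prob_algebraD[OF kmeas] unfolding measurable_cong_sets[OF sets_density[of \<mu> "indicator A"] refl] sets_mu
        measurable_cong_sets[OF sets_mu refl] by simp
    have eL: "emeasure L X = P2 A X" if X: "X \<in> sets borel" for X
    proof -
      have "emeasure L X = emeasure (density M (\<lambda>\<omega>. indicator A (W \<omega>))) (T -` X \<inter> space M)"
        unfolding L_def using X by (subst emeasure_distr) auto
      also have "\<dots> = (\<integral>\<^sup>+\<omega>. indicator A (W \<omega>) * indicator (T -` X \<inter> space M) \<omega> \<partial>M)"
        using X A by (subst emeasure_density) auto
      also have "\<dots> = (\<integral>\<^sup>+\<omega>. indicator {\<omega>\<in>space M. W \<omega> \<in> A \<and> T \<omega> \<in> X} \<omega> \<partial>M)"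
        by (intro nn_integral_cong) (auto split: split_indicator)
      also have "\<dots> = P2 A X" unfolding P2_def using X A by (subst nn_integral_indicator) auto
      finally show ?thesis .
    qed
    have eR: "emeasure R X = (\<integral>\<^sup>+x. indicator A x * emeasure (\<kappa> x) X \<partial>\<mu>)" if X: "X \<in> sets borel" for X
    proof -
      have "emeasure R X = (\<integral>\<^sup>+x. emeasure (\<kappa> x) X \<partial>density \<mu> (indicator A))"
        unfolding R_def using X Sne by (intro emeasure_bind[OF _ kd]) (auto simp: sets_eq_imp_space_eq[OF sets_density])
      also have "\<dots> = (\<integral>\<^sup>+x. indicator A x * emeasure (\<kappa> x) X \<partial>\<mu>)"
        using A kX[OF X] by (subst nn_integral_density) (auto simp: measurable_cong_sets[OF sets_mu refl])
      finally show ?thesis .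
    qed
    have "L = R"
    proof (rule measure_eqI_generator_eq[OF Int_stable_rat_atMost, where \<Omega>=UNIV and A="\<lambda>i. {..real_of_rat (of_nat i)}"])
      show "range (\<lambda>q::rat. {..real_of_rat q}) \<subseteq> Pow UNIV" by simp
      fix X assume "X \<in> range (\<lambda>q::rat. {..real_of_rat q})"
      then obtain q where q: "X = {..real_of_rat q}" by blast
      have "emeasure L X = P2 A {..real_of_rat q}" unfolding q by (rule eL) simp
      also have "\<dots> = (\<integral>\<^sup>+x. H q x * indicator A x \<partial>\<mu>)" using HB[OF A] by simp
      also have "\<dots> = (\<integral>\<^sup>+x. indicator A x * emeasure (\<kappa> x) {..real_of_rat q} \<partial>\<mu>)"
        using AE_G by (intro nn_integral_cong_AE, eventually_elim) (simp add: key mult.commute)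
      also have "\<dots> = emeasure R X" unfolding q by (rule eR[symmetric]) simp
      finally show "emeasure L X = emeasure R X" .
    next
      show "sets L = sigma_sets UNIV (range (\<lambda>q::rat. {..real_of_rat q}))"
        unfolding L_def using borel_rat_atMost by simp
      show "sets R = sigma_sets UNIV (range (\<lambda>q::rat. {..real_of_rat q}))"
        unfolding R_def using borel_rat_atMost Sne
        by (subst sets_bind[where N=borel]) (auto simp: sets_eq_imp_space_eq[OF sets_density])
      show "range (\<lambda>i. {..real_of_rat (of_nat i)}) \<subseteq> range (\<lambda>q::rat. {..real_of_rat q})"
        by (rule image_subsetI) (rule rangeI)
      show "(\<Union>i. {..real_of_rat (of_nat i)}) = (UNIV :: real set)"
      proof (intro set_eqI iffI)
        fix y :: real
        obtain n :: nat where "y \<le> real n" using real_arch_simple by blast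
        then show "y \<in> (\<Union>i. {..real_of_rat (of_nat i)})" by auto
      qed auto
      show "emeasure L {..real_of_rat (of_nat i)} \<noteq> \<infinity>" for i
        using eL[of "{..real_of_rat (of_nat i)}"] unfolding P2_def by (simp add: emeasure_finite)
    qed
    then have "emeasure L B = emeasure R B" by simp
    then show ?thesis using eL[OF B] eR[OF B] by simp
  qed
  show ?thesis
  proof (intro bexI[OF _ kmeas] ballI)
    fix A B assume "A \<in> sets S" "B \<in> sets (borel :: real measure)"
    then show "emeasure M {\<omega>\<in>space M. W \<omega> \<in> A \<and> T \<omega> \<in> B} = (\<integral>\<^sup>+x. indicator A x * emeasure (\<kappa> x) B \<partial>distr M S W)"
      using final unfolding P2_def \<mu>_def by simp
  qed
qed

lemma pair_from_rect:
  fixes M :: "'w measure" and S :: "'s measure" and T :: "'t measure"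
  assumes P: "prob_space M" and W[measurable]: "W \<in> M \<rightarrow>\<^sub>M S" and V[measurable]: "V \<in> M \<rightarrow>\<^sub>M T"
    and K[measurable]: "K \<in> S \<rightarrow>\<^sub>M prob_algebra T"
    and rect: "\<And>A B. A \<in> sets S \<Longrightarrow> B \<in> sets T \<Longrightarrow>
       emeasure M {\<omega>\<in>space M. W \<omega> \<in> A \<and> V \<omega> \<in> B} = (\<integral>\<^sup>+x. indicator A x * emeasure (K x) B \<partial>distr M S W)"
    and g[measurable]: "g \<in> borel_measurable (S \<Otimes>\<^sub>M T)"
  shows "(\<integral>\<^sup>+\<omega>. g (W \<omega>, V \<omega>) \<partial>M) = (\<integral>\<^sup>+x. \<integral>\<^sup>+y. g (x, y) \<partial>K x \<partial>distr M S W)"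
proof -
  interpret prob_space M by (rule P)
  define \<mu> where "\<mu> = distr M S W"
  have Sne: "space S \<noteq> {}" using not_empty measurable_space[OF W] by auto
  define Pm where "Pm = distr M (S \<Otimes>\<^sub>M T) (\<lambda>\<omega>. (W \<omega>, V \<omega>))"
  define Kp where "Kp x = distr (K x) (S \<Otimes>\<^sub>M T) (Pair x)" for x
  have Kp: "Kp \<in> S \<rightarrow>\<^sub>M prob_algebra (S \<Otimes>\<^sub>M T)"
    unfolding Kp_def by (rule measurable_distr_prob_space2[OF K]) simp
  have Kps: "Kp \<in> \<mu> \<rightarrow>\<^sub>M subprob_algebra (S \<Otimes>\<^sub>M T)"
    using measurable_prob_algebraD[OF Kp] unfolding \<mu>_def measurable_cong_sets[OF sets_distr refl] .
  define Qm where "Qm = \<mu> \<bind> Kp"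
  have space_mu: "space \<mu> = space S" unfolding \<mu>_def by simp
  have Kx: "x \<in> space S \<Longrightarrow> prob_space (K x) \<and> sets (K x) = sets T" for x
    using measurable_space[OF K, of x] by (simp add: space_prob_algebra)
  have PairK: "x \<in> space S \<Longrightarrow> Pair x \<in> K x \<rightarrow>\<^sub>M S \<Otimes>\<^sub>M T" for x
    using measurable_Pair1'[of x S T] Kx[of x] measurable_cong_sets[of "K x" T "S \<Otimes>\<^sub>M T" "S \<Otimes>\<^sub>M T"] by simp
  have "Pm = Qm"
  proof (rule measure_eqI_generator_eq[OF Int_stable_pair_measure_generator pair_measure_closed,
        where A="\<lambda>i. space S \<times> space T"])
    fix X assume "X \<in> {a \<times> b |a b. a \<in> sets S \<and> b \<in> sets T}"
    then obtain a b where X: "X = a \<times> b" "a \<in> sets S" "b \<in> sets T" by blast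
    have Xs: "X \<in> sets (S \<Otimes>\<^sub>M T)" unfolding X(1) using X(2,3) by (rule pair_measureI)
    have WV: "(\<lambda>\<omega>. (W \<omega>, V \<omega>)) \<in> M \<rightarrow>\<^sub>M S \<Otimes>\<^sub>M T" by measurable
    have pre: "(\<lambda>\<omega>. (W \<omega>, V \<omega>)) -` X \<inter> space M = {\<omega>\<in>space M. W \<omega> \<in> a \<and> V \<omega> \<in> b}"
      unfolding X(1) by blast
    have "emeasure Pm X = emeasure M {\<omega>\<in>space M. W \<omega> \<in> a \<and> V \<omega> \<in> b}"
      unfolding Pm_def emeasure_distr[OF WV Xs] pre ..
    also have "\<dots> = (\<integral>\<^sup>+x. indicator a x * emeasure (K x) b \<partial>\<mu>)" unfolding \<mu>_def by (rule rect[OF X(2,3)])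
    also have "\<dots> = (\<integral>\<^sup>+x. emeasure (Kp x) X \<partial>\<mu>)"
    proof (rule nn_integral_cong)
      fix x assume x: "x \<in> space \<mu>"
      then have x': "x \<in> space S" using space_mu by simp
      have sp: "space (K x) = space T" using Kx[OF x'] sets_eq_imp_space_eq[of "K x" T] by blast
      have bT: "b \<subseteq> space T" using sets.sets_into_space[OF X(3)] .
      have eK: "emeasure (Kp x) X = emeasure (K x) (Pair x -` X \<inter> space (K x))"
        unfolding Kp_def by (rule emeasure_distr[OF PairK[OF x'] Xs])
      show "indicator a x * emeasure (K x) b = emeasure (Kp x) X"
      proof (cases "x \<in> a")
        case True
        have "Pair x -` X \<inter> space (K x) = b" unfolding X(1) sp using True bT by blast
        then show ?thesis using True eK by (simp add: indicator_def)
      next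
        case False
        have "Pair x -` X \<inter> space (K x) = {}" unfolding X(1) using False by blast
        then show ?thesis using False eK by (simp add: indicator_def)
      qed
    qed
    also have "\<dots> = emeasure Qm X" unfolding Qm_def
      using Sne space_mu by (subst emeasure_bind[OF _ Kps Xs]) auto
    finally show "emeasure Pm X = emeasure Qm X" .
  next
    show "sets Pm = sigma_sets (space S \<times> space T) {a \<times> b |a b. a \<in> sets S \<and> b \<in> sets T}"
      unfolding Pm_def by (simp add: sets_pair_measure)
    show "sets Qm = sigma_sets (space S \<times> space T) {a \<times> b |a b. a \<in> sets S \<and> b \<in> sets T}"
    proof -
      have "sets Qm = sets (S \<Otimes>\<^sub>M T)" unfolding Qm_def by (rule sets_bind) (auto simp: Kp_def Sne space_mu)
      then show ?thesis by (simp add: sets_pair_measure)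
    qed
    show "range (\<lambda>i. space S \<times> space T) \<subseteq> {a \<times> b |a b. a \<in> sets S \<and> b \<in> sets T}" by auto
    show "(\<Union>i. space S \<times> space T) = space S \<times> space T" by simp
    show "emeasure Pm (space S \<times> space T) \<noteq> \<infinity>" for i :: nat
      unfolding Pm_def by (subst emeasure_distr) (auto simp: emeasure_finite space_pair_measure)
  qed
  have "(\<integral>\<^sup>+\<omega>. g (W \<omega>, V \<omega>) \<partial>M) = (\<integral>\<^sup>+z. g z \<partial>Pm)"
    unfolding Pm_def by (subst nn_integral_distr) auto
  also have "\<dots> = (\<integral>\<^sup>+z. g z \<partial>Qm)" using \<open>Pm = Qm\<close> by simp
  also have "\<dots> = (\<integral>\<^sup>+x. \<integral>\<^sup>+z. g z \<partial>Kp x \<partial>\<mu>)"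
    unfolding Qm_def by (rule nn_integral_bind[OF g Kps])
  also have "\<dots> = (\<integral>\<^sup>+x. \<integral>\<^sup>+y. g (x, y) \<partial>K x \<partial>\<mu>)"
  proof (rule nn_integral_cong)
    fix x assume x: "x \<in> space \<mu>"
    then have x': "x \<in> space S" using space_mu by simp
    show "(\<integral>\<^sup>+z. g z \<partial>Kp x) = (\<integral>\<^sup>+y. g (x, y) \<partial>K x)"
      unfolding Kp_def using x' by (subst nn_integral_distr[OF PairK[OF x']]) auto
  qed
  finally show ?thesis unfolding \<mu>_def .
qed

lemma kernel_exists:
  fixes M :: "'w measure" and W V :: "'w \<Rightarrow> 'a::euclidean_space"
  assumes P: "prob_space M" and W[measurable]: "W \<in> borel_measurable M" and V[measurable]: "V \<in> borel_measurable M"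
  shows "\<exists>K \<in> (borel :: 'a measure) \<rightarrow>\<^sub>M prob_algebra borel. \<forall>g \<in> borel_measurable (borel \<Otimes>\<^sub>M borel).
           (\<integral>\<^sup>+\<omega>. g (W \<omega>, V \<omega>) \<partial>M) = (\<integral>\<^sup>+x. \<integral>\<^sup>+y. g (x, y) \<partial>K x \<partial>distr M borel W)"
proof -
  obtain \<phi> :: "'a \<Rightarrow> real" and \<psi> where \<phi>[measurable]: "\<phi> \<in> borel_measurable borel"
    and \<psi>[measurable]: "\<psi> \<in> borel_measurable borel" and bnd: "\<And>a. 0 \<le> \<phi> a \<and> \<phi> a \<le> 1"
    and inv: "\<And>a. \<psi> (\<phi> a) = a"
    using embedding_exists by blast
  have T: "(\<lambda>\<omega>. \<phi> (V \<omega>)) \<in> borel_measurable M" by measurable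
  obtain \<kappa> where \<kappa>: "\<kappa> \<in> (borel :: 'a measure) \<rightarrow>\<^sub>M prob_algebra borel"
    and rect: "\<And>A B. A \<in> sets borel \<Longrightarrow> B \<in> sets borel \<Longrightarrow>
      emeasure M {\<omega>\<in>space M. W \<omega> \<in> A \<and> \<phi> (V \<omega>) \<in> B} = (\<integral>\<^sup>+x. indicator A x * emeasure (\<kappa> x) B \<partial>distr M borel W)"
    using disint[OF P W T] bnd by blast
  define K where "K x = distr (\<kappa> x) borel \<psi>" for x
  have Km: "K \<in> (borel :: 'a measure) \<rightarrow>\<^sub>M prob_algebra borel"
    unfolding K_def by (rule measurable_distr_prob_space2[OF \<kappa>]) simp
  have ks: "sets (\<kappa> x) = sets borel" for x
    using measurable_space[OF \<kappa>, of x] by (simp add: space_prob_algebra)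
  have kspace: "space (\<kappa> x) = UNIV" for x using sets_eq_imp_space_eq[OF ks[of x]] by simp
  have \<psi>k: "\<psi> \<in> \<kappa> x \<rightarrow>\<^sub>M borel" for x using \<psi> unfolding measurable_cong_sets[OF ks[of x] refl] .
  have rect': "emeasure M {\<omega>\<in>space M. W \<omega> \<in> A \<and> V \<omega> \<in> B} = (\<integral>\<^sup>+x. indicator A x * emeasure (K x) B \<partial>distr M borel W)"
    if A: "A \<in> sets borel" and B: "B \<in> sets borel" for A B
  proof -
    have pB: "\<psi> -` B \<in> sets borel" using measurable_sets[OF \<psi> B] by simp
    have "{\<omega>\<in>space M. W \<omega> \<in> A \<and> V \<omega> \<in> B} = {\<omega>\<in>space M. W \<omega> \<in> A \<and> \<phi> (V \<omega>) \<in> \<psi> -` B}"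
      using inv by auto
    also have "emeasure M \<dots> = (\<integral>\<^sup>+x. indicator A x * emeasure (\<kappa> x) (\<psi> -` B) \<partial>distr M borel W)"
      by (rule rect[OF A pB])
    also have "\<dots> = (\<integral>\<^sup>+x. indicator A x * emeasure (K x) B \<partial>distr M borel W)"
      unfolding K_def using emeasure_distr[OF \<psi>k B] kspace by simp
    finally show ?thesis .
  qed
  show ?thesis
  proof (intro bexI[OF _ Km] ballI)
    fix g :: "'a \<times> 'a \<Rightarrow> ennreal" assume g: "g \<in> borel_measurable (borel \<Otimes>\<^sub>M borel)"
    show "(\<integral>\<^sup>+\<omega>. g (W \<omega>, V \<omega>) \<partial>M) = (\<integral>\<^sup>+x. \<integral>\<^sup>+y. g (x, y) \<partial>K x \<partial>distr M borel W)"
      by (rule pair_from_rect[OF P W V Km rect' g])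
  qed
qed

abbreviation RR :: "(nat \<Rightarrow> 'a::euclidean_space) measure" where
  "RR \<equiv> PiM UNIV (\<lambda>_. borel)"

primrec chain :: "(nat \<Rightarrow> 'a::euclidean_space \<Rightarrow> 'a measure) \<Rightarrow> nat \<Rightarrow> (nat \<Rightarrow> 'a) measure" where
  "chain K 0 = return RR (\<lambda>_. 0)"
| "chain K (Suc k) = chain K k \<bind> (\<lambda>f. distr (K k (f k)) RR (\<lambda>y. f(Suc k := y)))"

lemma space_RR[simp]: "space RR = UNIV"
  by (simp add: space_PiM)

lemma upd_meas: "(\<lambda>(f, y). f(i := y)) \<in> RR \<Otimes>\<^sub>M borel \<rightarrow>\<^sub>M (RR :: (nat \<Rightarrow> 'a::euclidean_space) measure)"
  using measurable_add_dim[of i UNIV "\<lambda>_. borel :: 'a measure"] by simp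

lemma upd_meas1: "(\<lambda>y. f(i := y)) \<in> borel \<rightarrow>\<^sub>M (RR :: (nat \<Rightarrow> 'a::euclidean_space) measure)"
  by (rule measurable_fun_upd[where J=UNIV]) auto

context
  fixes K :: "nat \<Rightarrow> 'a::euclidean_space \<Rightarrow> 'a measure"
  assumes K: "\<And>k. K k \<in> borel \<rightarrow>\<^sub>M prob_algebra borel"
begin

lemma step_meas: "(\<lambda>f. distr (K k (f k)) RR (\<lambda>y. f(Suc k := y))) \<in> RR \<rightarrow>\<^sub>M prob_algebra RR"
proof (rule measurable_distr_prob_space2[where f="\<lambda>f y. f(Suc k := y)"])
  show "(\<lambda>f. K k (f k)) \<in> RR \<rightarrow>\<^sub>M prob_algebra borel"
    using measurable_compose[OF measurable_component_singleton[of k UNIV "\<lambda>_. borel"] K[of k]] by simp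
  show "(\<lambda>(f, y). f(Suc k := y)) \<in> RR \<Otimes>\<^sub>M borel \<rightarrow>\<^sub>M RR" by (rule upd_meas)
qed

lemma chain_space: "chain K k \<in> space (prob_algebra RR)"
proof (induction k)
  case 0 then show ?case by (simp add: space_prob_algebra prob_space_return)
next
  case (Suc k)
  have "chain K k \<bind> (\<lambda>f. distr (K k (f k)) RR (\<lambda>y. f(Suc k := y))) \<in> space (prob_algebra RR)"
    using prob_space_bind'[OF Suc step_meas] sets_bind'[OF Suc step_meas] by (simp add: space_prob_algebra)
  then show ?case by simp
qed

lemma chain_prob: "prob_space (chain K k)" and chain_sets[simp]: "sets (chain K k) = sets RR"
  using chain_space[of k] by (auto simp: space_prob_algebra)

lemma chain_space'[simp]: "space (chain K k) = UNIV"
  using sets_eq_imp_space_eq[OF chain_sets[of k]] by simp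

lemma chain_nn_step:
  assumes G[measurable]: "G \<in> borel_measurable RR"
  shows "(\<integral>\<^sup>+f. G f \<partial>chain K (Suc k)) = (\<integral>\<^sup>+f. \<integral>\<^sup>+y. G (f(Suc k := y)) \<partial>K k (f k) \<partial>chain K k)"
proof -
  have sm: "(\<lambda>f. distr (K k (f k)) RR (\<lambda>y. f(Suc k := y))) \<in> chain K k \<rightarrow>\<^sub>M subprob_algebra RR"
    using measurable_prob_algebraD[OF step_meas] unfolding measurable_cong_sets[OF chain_sets[of k] refl] .
  have "(\<integral>\<^sup>+f. G f \<partial>chain K (Suc k)) = (\<integral>\<^sup>+f. \<integral>\<^sup>+z. G z \<partial>distr (K k (f k)) RR (\<lambda>y. f(Suc k := y)) \<partial>chain K k)"
    by (simp add: nn_integral_bind[OF G sm])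
  also have "\<dots> = (\<integral>\<^sup>+f. \<integral>\<^sup>+y. G (f(Suc k := y)) \<partial>K k (f k) \<partial>chain K k)"
  proof (rule nn_integral_cong)
    fix f
    have Kf: "K k (f k) \<in> space (prob_algebra borel)" using measurable_space[OF K[of k]] by simp
    then have ss: "sets (K k (f k)) = sets borel" by (simp add: space_prob_algebra)
    have um: "(\<lambda>y. f(Suc k := y)) \<in> K k (f k) \<rightarrow>\<^sub>M RR"
      using upd_meas1[of f "Suc k"] unfolding measurable_cong_sets[OF ss refl] .
    show "(\<integral>\<^sup>+z. G z \<partial>distr (K k (f k)) RR (\<lambda>y. f(Suc k := y))) = (\<integral>\<^sup>+y. G (f(Suc k := y)) \<partial>K k (f k))"
      by (rule nn_integral_distr[OF um]) simp
  qed
  finally show ?thesis .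
qed

lemma K_prob: "prob_space (K k x)" and K_sets[simp]: "sets (K k x) = sets borel"
  using measurable_space[OF K[of k], of x] by (auto simp: space_prob_algebra)

lemma chain_stab:
  assumes G[measurable]: "G \<in> borel_measurable RR"
    and inv: "\<And>f y m. k < m \<Longrightarrow> G (f(m := y)) = G f"
    and km: "k \<le> m"
  shows "(\<integral>\<^sup>+f. G f \<partial>chain K m) = (\<integral>\<^sup>+f. G f \<partial>chain K k)"
  using km
proof (induction m rule: dec_induct)
  case base then show ?case by simp
next
  case (step m)
  have "(\<integral>\<^sup>+f. G f \<partial>chain K (Suc m)) = (\<integral>\<^sup>+f. \<integral>\<^sup>+y. G (f(Suc m := y)) \<partial>K m (f m) \<partial>chain K m)"
    by (rule chain_nn_step[OF G])
  also have "\<dots> = (\<integral>\<^sup>+f. \<integral>\<^sup>+y. G f \<partial>K m (f m) \<partial>chain K m)"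
    using step inv by simp
  also have "\<dots> = (\<integral>\<^sup>+f. G f \<partial>chain K m)"
    by (intro nn_integral_cong) (simp add: prob_space.emeasure_space_1[OF K_prob])
  finally show ?case using step by simp
qed

end

lemma cond_exp_charact_prob:
  assumes P: "prob_space N" and sub: "subalgebra N F" and [measurable]: "integrable N f" "integrable N g"
    and gF[measurable]: "g \<in> borel_measurable F"
    and eq: "\<And>A. A \<in> sets F \<Longrightarrow> (\<integral>x\<in>A. f x \<partial>N) = (\<integral>x\<in>A. g x \<partial>N)"
  shows "AE x in N. real_cond_exp N F f x = g x"
proof -
  interpret prob_space N by (rule P)
  interpret F: finite_measure_subalgebra N F by unfold_locales (rule sub)
  show ?thesis by (rule F.real_cond_exp_charact) (use eq gF assms(3,4) in auto)
qed

lemma real_from_nn1: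
  fixes D :: "'z measure" and c :: "'z \<Rightarrow> real" and v w :: "'z \<Rightarrow> 'a::euclidean_space"
    and L :: "'a \<Rightarrow> 'a measure" and \<phi> :: "'a \<Rightarrow> real"
  assumes c[measurable]: "c \<in> borel_measurable D" and c01: "\<And>z. c z = 0 \<or> c z = 1"
    and v[measurable]: "v \<in> borel_measurable D" and w[measurable]: "w \<in> borel_measurable D"
    and L: "L \<in> borel \<rightarrow>\<^sub>M prob_algebra borel" and \<phi>[measurable]: "\<phi> \<in> borel_measurable borel"
    and nn: "(\<integral>\<^sup>+z. ennreal (c z) * ennreal (\<phi> (v z)) \<partial>D) = (\<integral>\<^sup>+z. ennreal (c z) * (\<integral>\<^sup>+y. ennreal (\<phi> y) \<partial>L (w z)) \<partial>D)"
    and int: "integrable D (\<lambda>z. \<phi> (v z))"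
  shows "integrable D (\<lambda>z. c z * enn2real (\<integral>\<^sup>+y. ennreal (\<phi> y) \<partial>L (w z)))"
    "(\<integral>z. c z * max 0 (\<phi> (v z)) \<partial>D) = (\<integral>z. c z * enn2real (\<integral>\<^sup>+y. ennreal (\<phi> y) \<partial>L (w z)) \<partial>D)"
proof -
  define H where "H x = (\<integral>\<^sup>+y. ennreal (\<phi> y) \<partial>L x)" for x
  have H[measurable]: "H \<in> borel_measurable borel"
    using measurable_compose[OF measurable_prob_algebraD[OF L] nn_integral_measurable_subprob_algebra[of "\<lambda>y. ennreal (\<phi> y)" borel]]
    unfolding H_def by simp
  have c0: "0 \<le> c z" for z using c01[of z] by auto
  have "(\<integral>\<^sup>+z. ennreal (c z) * ennreal (\<phi> (v z)) \<partial>D) \<le> (\<integral>\<^sup>+z. ennreal (norm (\<phi> (v z))) \<partial>D)"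
  proof (rule nn_integral_mono)
    fix z
    have "ennreal (\<phi> (v z)) \<le> ennreal (norm (\<phi> (v z)))" by (rule ennreal_leI) simp
    then show "ennreal (c z) * ennreal (\<phi> (v z)) \<le> ennreal (norm (\<phi> (v z)))"
      using c01[of z] by auto
  qed
  also have "\<dots> < \<infinity>" using int by (simp add: integrable_iff_bounded)
  finally have fin: "(\<integral>\<^sup>+z. ennreal (c z) * H (w z) \<partial>D) < \<infinity>" using nn unfolding H_def by simp
  have AEfin: "AE z in D. ennreal (c z) * H (w z) \<noteq> \<infinity>"
    by (rule nn_integral_PInf_AE) (use fin in auto)
  have ae_eq: "AE z in D. ennreal (c z * enn2real (H (w z))) = ennreal (c z) * H (w z)"
    using AEfin
  proof eventually_elim
    case (elim z)
    show ?case
    proof (cases "c z = 0")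
      case True then show ?thesis by simp
    next
      case False
      then have "c z = 1" using c01 by auto
      then show ?thesis using elim by (simp add: ennreal_enn2real_if)
    qed
  qed
  have nnR: "(\<integral>\<^sup>+z. ennreal (c z * enn2real (H (w z))) \<partial>D) = (\<integral>\<^sup>+z. ennreal (c z) * H (w z) \<partial>D)"
    by (rule nn_integral_cong_AE[OF ae_eq])
  show "integrable D (\<lambda>z. c z * enn2real (\<integral>\<^sup>+y. ennreal (\<phi> y) \<partial>L (w z)))"
    unfolding H_def[symmetric]
    by (rule integrableI_nonneg) (use c0 nnR fin in auto)
  have e1: "(\<integral>z. c z * max 0 (\<phi> (v z)) \<partial>D) = enn2real (\<integral>\<^sup>+z. ennreal (c z * max 0 (\<phi> (v z))) \<partial>D)"
    by (rule integral_eq_nn_integral) (use c0 in auto)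
  have e2: "(\<integral>\<^sup>+z. ennreal (c z * max 0 (\<phi> (v z))) \<partial>D) = (\<integral>\<^sup>+z. ennreal (c z) * ennreal (\<phi> (v z)) \<partial>D)"
    by (intro nn_integral_cong) (simp add: ennreal_mult c0)
  have e3: "(\<integral>z. c z * enn2real (H (w z)) \<partial>D) = enn2real (\<integral>\<^sup>+z. ennreal (c z * enn2real (H (w z))) \<partial>D)"
    by (rule integral_eq_nn_integral) (use c0 in auto)
  show "(\<integral>z. c z * max 0 (\<phi> (v z)) \<partial>D) = (\<integral>z. c z * enn2real (\<integral>\<^sup>+y. ennreal (\<phi> y) \<partial>L (w z)) \<partial>D)"
    unfolding H_def[symmetric] e1 e2 e3 nnR using nn unfolding H_def by simp
qed

lemma real_from_nn:
  fixes D :: "'z measure" and c :: "'z \<Rightarrow> real" and v w :: "'z \<Rightarrow> 'a::euclidean_space"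
    and L :: "'a \<Rightarrow> 'a measure" and b :: 'a
  assumes c[measurable]: "c \<in> borel_measurable D" and c01: "\<And>z. c z = 0 \<or> c z = 1"
    and v[measurable]: "v \<in> borel_measurable D" and w[measurable]: "w \<in> borel_measurable D"
    and L: "L \<in> borel \<rightarrow>\<^sub>M prob_algebra borel"
    and nn: "\<And>G. G \<in> borel_measurable borel \<Longrightarrow>
      (\<integral>\<^sup>+z. ennreal (c z) * G (v z) \<partial>D) = (\<integral>\<^sup>+z. ennreal (c z) * (\<integral>\<^sup>+y. G y \<partial>L (w z)) \<partial>D)"
    and int: "integrable D (\<lambda>z. v z \<bullet> b)"
  shows "integrable D (\<lambda>z. c z * (enn2real (\<integral>\<^sup>+y. ennreal (y \<bullet> b) \<partial>L (w z)) - enn2real (\<integral>\<^sup>+y. ennreal (- (y \<bullet> b)) \<partial>L (w z))))"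
    "(\<integral>z. c z * (v z \<bullet> b) \<partial>D) =
       (\<integral>z. c z * (enn2real (\<integral>\<^sup>+y. ennreal (y \<bullet> b) \<partial>L (w z)) - enn2real (\<integral>\<^sup>+y. ennreal (- (y \<bullet> b)) \<partial>L (w z))) \<partial>D)"
proof -
  have int2: "integrable D (\<lambda>z. - (v z \<bullet> b))" using int by simp
  have m1: "(\<lambda>y::'a. y \<bullet> b) \<in> borel_measurable borel" by simp
  have m2: "(\<lambda>y::'a. - (y \<bullet> b)) \<in> borel_measurable borel" by simp
  have nn1: "(\<integral>\<^sup>+z. ennreal (c z) * ennreal (v z \<bullet> b) \<partial>D) = (\<integral>\<^sup>+z. ennreal (c z) * (\<integral>\<^sup>+y. ennreal (y \<bullet> b) \<partial>L (w z)) \<partial>D)"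
    by (rule nn) simp
  have nn2: "(\<integral>\<^sup>+z. ennreal (c z) * ennreal (- (v z \<bullet> b)) \<partial>D) = (\<integral>\<^sup>+z. ennreal (c z) * (\<integral>\<^sup>+y. ennreal (- (y \<bullet> b)) \<partial>L (w z)) \<partial>D)"
    by (rule nn) simp
  note p = real_from_nn1[where \<phi>="\<lambda>y. y \<bullet> b", OF c c01 v w L m1 nn1 int]
  note n = real_from_nn1[where \<phi>="\<lambda>y. - (y \<bullet> b)", OF c c01 v w L m2 nn2 int2]
  have bnd: "\<bar>c z * t\<bar> \<le> \<bar>t\<bar>" for z t using c01[of z] by auto
  have ip: "integrable D (\<lambda>z. c z * max 0 (v z \<bullet> b))"
    by (rule Bochner_Integration.integrable_bound[OF int]) (auto intro!: AE_I2 order_trans[OF bnd] split: split_max)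
  have in_: "integrable D (\<lambda>z. c z * max 0 (- (v z \<bullet> b)))"
    by (rule Bochner_Integration.integrable_bound[OF int]) (auto intro!: AE_I2 order_trans[OF bnd] split: split_max)
  have "(\<integral>z. c z * (v z \<bullet> b) \<partial>D) = (\<integral>z. c z * max 0 (v z \<bullet> b) - c z * max 0 (- (v z \<bullet> b)) \<partial>D)"
    by (intro Bochner_Integration.integral_cong refl) (simp add: max_def algebra_simps)
  also have "\<dots> = (\<integral>z. c z * max 0 (v z \<bullet> b) \<partial>D) - (\<integral>z. c z * max 0 (- (v z \<bullet> b)) \<partial>D)"
    by (rule Bochner_Integration.integral_diff[OF ip in_])
  also have "\<dots> = (\<integral>z. c z * enn2real (\<integral>\<^sup>+y. ennreal (y \<bullet> b) \<partial>L (w z)) \<partial>D) -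
      (\<integral>z. c z * enn2real (\<integral>\<^sup>+y. ennreal (- (y \<bullet> b)) \<partial>L (w z)) \<partial>D)"
    using p(2) n(2) by simp
  also have "\<dots> = (\<integral>z. c z * enn2real (\<integral>\<^sup>+y. ennreal (y \<bullet> b) \<partial>L (w z)) - c z * enn2real (\<integral>\<^sup>+y. ennreal (- (y \<bullet> b)) \<partial>L (w z)) \<partial>D)"
    by (rule Bochner_Integration.integral_diff[symmetric]) (use p(1) n(1) in simp_all)
  finally show "(\<integral>z. c z * (v z \<bullet> b) \<partial>D) =
       (\<integral>z. c z * (enn2real (\<integral>\<^sup>+y. ennreal (y \<bullet> b) \<partial>L (w z)) - enn2real (\<integral>\<^sup>+y. ennreal (- (y \<bullet> b)) \<partial>L (w z))) \<partial>D)"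
    by (simp add: right_diff_distrib)
  show "integrable D (\<lambda>z. c z * (enn2real (\<integral>\<^sup>+y. ennreal (y \<bullet> b) \<partial>L (w z)) - enn2real (\<integral>\<^sup>+y. ennreal (- (y \<bullet> b)) \<partial>L (w z))))"
    using Bochner_Integration.integrable_diff[OF p(1) n(1)] by (simp add: right_diff_distrib)
qed

theorem proposition4:
  fixes M :: "'w measure" and X :: "nat \<Rightarrow> 'w \<Rightarrow> 'a::euclidean_space" and n :: nat
  assumes "prob_space M"
    and "\<And>i. i \<in> {1..n} \<Longrightarrow> X i \<in> borel_measurable M"
    and "martingale M X n"
  shows "\<exists>(N :: (nat \<Rightarrow> 'a) measure) (Y :: nat \<Rightarrow> (nat \<Rightarrow> 'a) \<Rightarrow> 'a).
           prob_space N \<and>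
           (\<forall>i\<in>{1..n}. Y i \<in> borel_measurable N) \<and>
           martingale N Y n \<and> markov N Y n \<and>
           (\<forall>i\<in>{1..n}. distr N borel (Y i) = distr M borel (X i))"
proof -
  interpret P: prob_space M by (rule assms(1))
  have Xm: "1 \<le> i \<Longrightarrow> i \<le> n \<Longrightarrow> X i \<in> borel_measurable M" for i using assms(2) by auto
  define \<mu> where "\<mu> i = distr M borel (X i)" for i
  have Kex: "\<forall>k. \<exists>Kk. Kk \<in> (borel::'a measure) \<rightarrow>\<^sub>M prob_algebra borel \<and> (k = 0 \<and> 1 \<le> n \<longrightarrow> Kk = (\<lambda>_. \<mu> 1)) \<and>
     (1 \<le> k \<and> k < n \<longrightarrow> (\<forall>g \<in> borel_measurable (borel \<Otimes>\<^sub>M borel).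
        (\<integral>\<^sup>+\<omega>. g (X k \<omega>, X (Suc k) \<omega>) \<partial>M) = (\<integral>\<^sup>+x. \<integral>\<^sup>+y. g (x, y) \<partial>Kk x \<partial>\<mu> k)))"
  proof
    fix k
    show "\<exists>Kk. Kk \<in> (borel::'a measure) \<rightarrow>\<^sub>M prob_algebra borel \<and> (k = 0 \<and> 1 \<le> n \<longrightarrow> Kk = (\<lambda>_. \<mu> 1)) \<and>
     (1 \<le> k \<and> k < n \<longrightarrow> (\<forall>g \<in> borel_measurable (borel \<Otimes>\<^sub>M borel).
        (\<integral>\<^sup>+\<omega>. g (X k \<omega>, X (Suc k) \<omega>) \<partial>M) = (\<integral>\<^sup>+x. \<integral>\<^sup>+y. g (x, y) \<partial>Kk x \<partial>\<mu> k)))"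
    proof (cases "1 \<le> k \<and> k < n")
      case True
      then have "X k \<in> borel_measurable M" "X (Suc k) \<in> borel_measurable M" using Xm by auto
      from kernel_exists[OF assms(1) this] obtain Kk where
        "Kk \<in> (borel::'a measure) \<rightarrow>\<^sub>M prob_algebra borel"
        "\<forall>g \<in> borel_measurable (borel \<Otimes>\<^sub>M borel). (\<integral>\<^sup>+\<omega>. g (X k \<omega>, X (Suc k) \<omega>) \<partial>M) = (\<integral>\<^sup>+x. \<integral>\<^sup>+y. g (x, y) \<partial>Kk x \<partial>\<mu> k)"
        unfolding \<mu>_def by blast
      then show ?thesis using True by (intro exI[of _ Kk]) auto
    next
      case False
      show ?thesis
      proof (cases "1 \<le> n")
        case True
        have "X 1 \<in> borel_measurable M" using Xm True by auto
        then have "\<mu> 1 \<in> space (prob_algebra borel)"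
          unfolding \<mu>_def by (simp add: space_prob_algebra P.prob_space_distr)
        then show ?thesis using False by (intro exI[of _ "\<lambda>_. \<mu> 1"]) auto
      next
        case False2: False
        have "return borel (0::'a) \<in> space (prob_algebra borel)"
          by (simp add: space_prob_algebra prob_space_return)
        then show ?thesis using False False2 by (intro exI[of _ "\<lambda>_. return borel 0"]) auto
      qed
    qed
  qed
  from choice[OF Kex] obtain K where Kall: "\<forall>k. K k \<in> (borel::'a measure) \<rightarrow>\<^sub>M prob_algebra borel \<and> (k = 0 \<and> 1 \<le> n \<longrightarrow> K k = (\<lambda>_. \<mu> 1)) \<and>
     (1 \<le> k \<and> k < n \<longrightarrow> (\<forall>g \<in> borel_measurable (borel \<Otimes>\<^sub>M borel).
        (\<integral>\<^sup>+\<omega>. g (X k \<omega>, X (Suc k) \<omega>) \<partial>M) = (\<integral>\<^sup>+x. \<integral>\<^sup>+y. g (x, y) \<partial>K k x \<partial>\<mu> k)))" ..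
  have K: "\<And>k. K k \<in> (borel::'a measure) \<rightarrow>\<^sub>M prob_algebra borel" using Kall by blast
  have K0: "1 \<le> n \<Longrightarrow> K 0 = (\<lambda>_. \<mu> 1)" using Kall by blast
  have Kid: "\<And>k g. 1 \<le> k \<Longrightarrow> k < n \<Longrightarrow> g \<in> borel_measurable (borel \<Otimes>\<^sub>M borel) \<Longrightarrow>
        (\<integral>\<^sup>+\<omega>. g (X k \<omega>, X (Suc k) \<omega>) \<partial>M) = (\<integral>\<^sup>+x. \<integral>\<^sup>+y. g (x, y) \<partial>K k x \<partial>\<mu> k)"
    using Kall by blast
  define N where "N = chain K n"
  define Y where "Y = (\<lambda>i (f :: nat \<Rightarrow> 'a). f i)"
  have PN: "prob_space N" unfolding N_def by (rule chain_prob[OF K])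
  have Ymeas: "(\<lambda>f. f i) \<in> chain K m \<rightarrow>\<^sub>M borel" for i m
    using measurable_component_singleton[of i UNIV "\<lambda>_. borel :: 'a measure"]
    unfolding measurable_cong_sets[OF chain_sets[OF K] refl] by simp
  have Ksets: "sets (K k x) = sets borel" for k x using K_sets[OF K] .
  have Kprob: "prob_space (K k x)" for k x using K_prob[OF K] .
  have Kem: "(\<lambda>x. emeasure (K k x) B) \<in> borel_measurable borel" if "B \<in> sets borel" for k B
    using measurable_compose[OF measurable_prob_algebraD[OF K[of k]] measurable_emeasure_subprob_algebra[OF that]] by simp
  have eD: "emeasure (distr (chain K m) borel (\<lambda>f. f j)) B = (\<integral>\<^sup>+f. indicator B (f j) \<partial>chain K m)"
    if B: "B \<in> sets borel" for m j B
  proof -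
    have "emeasure (distr (chain K m) borel (\<lambda>f. f j)) B = (\<integral>\<^sup>+x. indicator B x \<partial>distr (chain K m) borel (\<lambda>f. f j))"
      using B by simp
    also have "\<dots> = (\<integral>\<^sup>+f. indicator B (f j) \<partial>chain K m)" using B by (subst nn_integral_distr[OF Ymeas]) auto
    finally show ?thesis .
  qed
  have marg_j: "1 \<le> j \<Longrightarrow> j \<le> n \<Longrightarrow> distr (chain K j) borel (\<lambda>f. f j) = \<mu> j" for j
  proof (induction j)
    case 0 then show ?case by simp
  next
    case (Suc j)
    show ?case
    proof (rule measure_eqI)
      show "sets (distr (chain K (Suc j)) borel (\<lambda>f. f (Suc j))) = sets (\<mu> (Suc j))" by (simp add: \<mu>_def)
      fix B assume "B \<in> sets (distr (chain K (Suc j)) borel (\<lambda>f. f (Suc j)))"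
      then have B[measurable]: "B \<in> sets borel" by simp
      have "emeasure (distr (chain K (Suc j)) borel (\<lambda>f. f (Suc j))) B = (\<integral>\<^sup>+f. indicator B (f (Suc j)) \<partial>chain K (Suc j))"
        by (rule eD[OF B])
      also have "\<dots> = (\<integral>\<^sup>+f. \<integral>\<^sup>+y. indicator B ((f(Suc j := y)) (Suc j)) \<partial>K j (f j) \<partial>chain K j)"
        by (rule chain_nn_step[OF K]) measurable
      also have "\<dots> = (\<integral>\<^sup>+f. emeasure (K j (f j)) B \<partial>chain K j)"
        by (intro nn_integral_cong) (simp add: Ksets)
      also have "\<dots> = emeasure (\<mu> (Suc j)) B"
      proof (cases "j = 0")
        case True
        then have "K j = (\<lambda>_. \<mu> 1)" using K0 Suc.prems by simp
        then show ?thesis using True prob_space.emeasure_space_1[OF chain_prob[where K=K, OF K, of 0]]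
          by (simp del: chain.simps)
      next
        case False
        then have j: "1 \<le> j" "j < n" using Suc.prems by auto
        have "(\<integral>\<^sup>+f. emeasure (K j (f j)) B \<partial>chain K j) = (\<integral>\<^sup>+x. emeasure (K j x) B \<partial>distr (chain K j) borel (\<lambda>f. f j))"
          by (rule nn_integral_distr[OF Ymeas, symmetric]) (use Kem[OF B] in simp)
        also have "\<dots> = (\<integral>\<^sup>+x. emeasure (K j x) B \<partial>\<mu> j)" using Suc.IH j by simp
        also have "\<dots> = (\<integral>\<^sup>+x. \<integral>\<^sup>+y. indicator B y \<partial>K j x \<partial>\<mu> j)"
          by (intro nn_integral_cong) (simp add: Ksets)
        also have "\<dots> = (\<integral>\<^sup>+\<omega>. indicator B (X (Suc j) \<omega>) \<partial>M)"
          using Kid[OF j, of "\<lambda>(x, y). indicator B y"] by simp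
        also have "\<dots> = emeasure (\<mu> (Suc j)) B"
        proof -
          have XS: "X (Suc j) \<in> borel_measurable M" using Xm[of "Suc j"] Suc.prems by simp
          have "emeasure (\<mu> (Suc j)) B = (\<integral>\<^sup>+x. indicator B x \<partial>\<mu> (Suc j))" unfolding \<mu>_def by simp
          also have "\<dots> = (\<integral>\<^sup>+\<omega>. indicator B (X (Suc j) \<omega>) \<partial>M)" unfolding \<mu>_def
            by (rule nn_integral_distr[OF XS]) simp
          finally show ?thesis by simp
        qed
        finally show ?thesis .
      qed
      finally show "emeasure (distr (chain K (Suc j)) borel (\<lambda>f. f (Suc j))) B = emeasure (\<mu> (Suc j)) B" .
    qed
  qed
  have margN: "distr N borel (Y j) = \<mu> j" if j: "1 \<le> j" "j \<le> n" for j
  proof (rule measure_eqI)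
    show "sets (distr N borel (Y j)) = sets (\<mu> j)" by (simp add: \<mu>_def)
    fix B assume "B \<in> sets (distr N borel (Y j))"
    then have B[measurable]: "B \<in> sets borel" by simp
    have "emeasure (distr N borel (Y j)) B = (\<integral>\<^sup>+f. indicator B (f j) \<partial>chain K n)"
      unfolding N_def Y_def by (rule eD[OF B])
    also have "\<dots> = (\<integral>\<^sup>+f. indicator B (f j) \<partial>chain K j)"
      by (rule chain_stab[OF K]) (use j in auto)
    also have "\<dots> = emeasure (distr (chain K j) borel (\<lambda>f. f j)) B" by (rule eD[OF B, symmetric])
    also have "\<dots> = emeasure (\<mu> j) B" using marg_j[OF j] by simp
    finally show "emeasure (distr N borel (Y j)) B = emeasure (\<mu> j) B" .
  qed
  have spN: "space N = UNIV" unfolding N_def by (rule chain_space'[where K=K, OF K])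
  have setsN: "sets N = sets RR" unfolding N_def by (rule chain_sets[where K=K, OF K])
  define Gen where "Gen i = (\<Union>j\<in>{1..i}. {Y j -` A \<inter> space N | A. A \<in> sets borel})" for i
  have Gen_sub: "Gen i \<subseteq> Pow (space N)" for i by (auto simp: Gen_def)
  have filt_sets: "sets (nat_filtr N Y i) = sigma_sets (space N) (Gen i)" for i
    unfolding nat_filtr_def Gen_def[symmetric] using Gen_sub by (simp add: sets_measure_of)
  have filt_space: "space (nat_filtr N Y i) = space N" for i
    unfolding nat_filtr_def by (simp add: space_measure_of_conv)
  have Gen_N: "Gen i \<subseteq> sets N" for i
  proof
    fix E assume "E \<in> Gen i"
    then obtain j A where "E = Y j -` A \<inter> space N" "A \<in> sets borel" unfolding Gen_def by blast
    then show "E \<in> sets N" using measurable_sets[OF Ymeas[of j n]] unfolding N_def Y_def by simp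
  qed
  have filt_N: "sets (nat_filtr N Y i) \<subseteq> sets N" for i
    unfolding filt_sets using sets.sigma_sets_subset[OF Gen_N] .
  have subalg: "subalgebra N (nat_filtr N Y i)" for i
    unfolding subalgebra_def using filt_space filt_N by auto
  have filt_inv: "\<forall>f y. (f(m := y) \<in> E) = (f \<in> E)" if E: "E \<in> sets (nat_filtr N Y i)" and im: "i < m" for E i m
  proof -
    have "E \<in> sigma_sets (space N) (Gen i)" using E filt_sets by simp
    then show ?thesis
    proof (induction rule: sigma_sets.induct)
      case (Basic a)
      then obtain j A where "a = Y j -` A \<inter> space N" "j \<in> {1..i}" unfolding Gen_def by blast
      then show ?case using im by (auto simp: Y_def spN)
    next
      case (Compl a) then show ?case by (auto simp: spN)
    next
      case (Union a) then show ?case by blast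
    qed simp
  qed
  have Yfilt: "Y j \<in> nat_filtr N Y i \<rightarrow>\<^sub>M borel" if "1 \<le> j" "j \<le> i" for i j
  proof (rule measurableI)
    fix A :: "'a set" assume A: "A \<in> sets borel"
    have "Y j -` A \<inter> space N \<in> {Y j -` A \<inter> space N | A. A \<in> sets borel}" using A by blast
    then have "Y j -` A \<inter> space N \<in> Gen i" unfolding Gen_def using that by (intro UN_I[of j]) auto
    then show "Y j -` A \<inter> space (nat_filtr N Y i) \<in> sets (nat_filtr N Y i)"
      unfolding filt_space filt_sets by (rule sigma_sets.Basic)
  qed (simp add: Y_def)
  have vim_sub: "sets (vimage_algebra (space N) (Y i) borel) \<subseteq> sets (nat_filtr N Y i)" if "1 \<le> i" for i
  proof
    fix E assume "E \<in> sets (vimage_algebra (space N) (Y i) borel)"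
    moreover have "sets (vimage_algebra (space N) (Y i) borel) = {Y i -` A \<inter> space N | A. A \<in> sets borel}"
      by (rule sets_vimage_algebra2) simp
    ultimately obtain A where "A \<in> sets borel" "E = Y i -` A \<inter> space N" by blast
    then have "E \<in> {Y i -` A \<inter> space N | A. A \<in> sets borel}" by blast
    then have "E \<in> Gen i" unfolding Gen_def using that by (intro UN_I[of i]) auto
    then show "E \<in> sets (nat_filtr N Y i)" unfolding filt_sets by (rule sigma_sets.Basic)
  qed
  have KG: "(\<lambda>x. \<integral>\<^sup>+y. G y \<partial>K k x) \<in> borel_measurable borel" if "G \<in> borel_measurable borel" for G k
    using measurable_compose[OF measurable_prob_algebraD[OF K[of k]] nn_integral_measurable_subprob_algebra[OF that]] by simp
  have core: "(\<integral>\<^sup>+f. indicator E f * G (f (Suc i)) \<partial>N) = (\<integral>\<^sup>+f. indicator E f * (\<integral>\<^sup>+y. G y \<partial>K i (f i)) \<partial>N)"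
    if i: "1 \<le> i" "i < n" and E: "E \<in> sets (nat_filtr N Y i)" and G[measurable]: "G \<in> borel_measurable borel" for i E G
  proof -
    have ER[measurable]: "E \<in> sets RR" using filt_N[of i] E setsN by auto
    have KGi[measurable]: "(\<lambda>x. \<integral>\<^sup>+y. G y \<partial>K i x) \<in> borel_measurable borel" by (rule KG[OF G])
    have "(\<integral>\<^sup>+f. indicator E f * G (f (Suc i)) \<partial>N) = (\<integral>\<^sup>+f. indicator E f * G (f (Suc i)) \<partial>chain K (Suc i))"
      unfolding N_def
    proof (rule chain_stab[where K=K, OF K])
      show "(\<lambda>f. indicator E f * G (f (Suc i))) \<in> borel_measurable RR" by measurable
      show "indicator E (f(m := y)) * G ((f(m := y)) (Suc i)) = indicator E f * G (f (Suc i))" if "Suc i < m" for f y m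
        using filt_inv[OF E, of m] that by (simp add: indicator_def)
    qed (use i in auto)
    also have "\<dots> = (\<integral>\<^sup>+f. \<integral>\<^sup>+y. indicator E (f(Suc i := y)) * G ((f(Suc i := y)) (Suc i)) \<partial>K i (f i) \<partial>chain K i)"
      by (rule chain_nn_step[where K=K, OF K]) measurable
    also have "\<dots> = (\<integral>\<^sup>+f. indicator E f * (\<integral>\<^sup>+y. G y \<partial>K i (f i)) \<partial>chain K i)"
    proof (rule nn_integral_cong)
      fix f :: "nat \<Rightarrow> 'a"
      have "indicator E (f(Suc i := y)) = (indicator E f :: ennreal)" for y
        using filt_inv[OF E, of "Suc i"] by (simp add: indicator_def)
      then show "(\<integral>\<^sup>+y. indicator E (f(Suc i := y)) * G ((f(Suc i := y)) (Suc i)) \<partial>K i (f i)) = indicator E f * (\<integral>\<^sup>+y. G y \<partial>K i (f i))"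
      proof -
        assume ind: "\<And>y. indicator E (f(Suc i := y)) = (indicator E f :: ennreal)"
        have GK: "G \<in> borel_measurable (K i (f i))" using G unfolding measurable_cong_sets[OF Ksets refl] .
        show ?thesis using nn_integral_cmult[OF GK, of "indicator E f"] ind by simp
      qed
    qed
    also have "\<dots> = (\<integral>\<^sup>+f. indicator E f * (\<integral>\<^sup>+y. G y \<partial>K i (f i)) \<partial>N)"
      unfolding N_def
    proof (rule chain_stab[where K=K, OF K, symmetric])
      show "(\<lambda>f. indicator E f * (\<integral>\<^sup>+y. G y \<partial>K i (f i))) \<in> borel_measurable RR" by measurable
      show "indicator E (f(m := y)) * (\<integral>\<^sup>+y. G y \<partial>K i ((f(m := y)) i)) = indicator E f * (\<integral>\<^sup>+y. G y \<partial>K i (f i))"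
        if "i < m" for f y m
        using filt_inv[OF E that] that by (simp add: indicator_def)
    qed (use i in auto)
    finally show ?thesis .
  qed
  interpret PN: prob_space N by (rule PN)
  have Ksub: "subprob_space (K k x)" for k x using Kprob[of k x] by (rule prob_space_imp_subprob_space)
  have markovN: "markov N Y n"
    unfolding markov_def
  proof (intro allI impI ballI)
    fix i :: nat and B :: "'a set"
    assume i: "1 \<le> i \<and> i < n" and B[measurable]: "B \<in> sets borel"
    define g where "g = (indicator (Y (Suc i) -` B \<inter> space N) :: (nat \<Rightarrow> 'a) \<Rightarrow> real)"
    define h where "h f = measure (K i (f i)) B" for f :: "nat \<Rightarrow> 'a"
    have g_eq: "g f = indicator B (f (Suc i))" for f unfolding g_def Y_def spN by (simp add: indicator_def)
    have hm: "(\<lambda>x. measure (K i x) B) \<in> borel_measurable borel"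
      using Kem[OF B, of i] by (simp add: measure_def)
    have gN[measurable]: "g \<in> borel_measurable N"
    proof -
      have [measurable]: "Y (Suc i) -` B \<inter> space N \<in> sets N"
        using measurable_sets[OF Ymeas[of "Suc i" n] B] unfolding N_def Y_def .
      show ?thesis unfolding g_def by measurable
    qed
    have g0: "0 \<le> g f" for f by (simp add: g_def)
    have h0: "0 \<le> h f" for f by (simp add: h_def)
    have hN[measurable]: "h \<in> borel_measurable N"
      unfolding h_def using measurable_compose[OF Ymeas[of i n] hm] unfolding N_def by simp
    have gb: "AE f in N. norm (g f) \<le> 1" by (auto simp: g_def)
    have ig: "integrable N g" by (rule PN.integrable_const_bound[OF gb gN])
    have ih: "integrable N h"
      by (rule PN.integrable_const_bound[where B=1]) (auto simp: h_def prob_space.prob_le_1[OF Kprob])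
    have eq: "(\<integral>f\<in>A. g f \<partial>N) = (\<integral>f\<in>A. h f \<partial>N)" if A: "A \<in> sets (nat_filtr N Y i)" for A
    proof -
      have AN[measurable]: "A \<in> sets N" using A filt_N by auto
      have Keq: "emeasure (K i x) B = ennreal (measure (K i x) B)" for x
        using emeasure_eq_ennreal_measure[of "K i x" B] prob_space.emeasure_le_1[OF Kprob, of i x B]
        by (metis ennreal_one_neq_top neq_top_trans)
      have Kint: "(\<integral>\<^sup>+y. indicator B y \<partial>K i x) = ennreal (measure (K i x) B)" for x
        using nn_integral_indicator[of B "K i x"] Keq[of x] Ksets by simp
      have "(\<integral>f\<in>A. g f \<partial>N) = enn2real (\<integral>\<^sup>+f. ennreal (indicator A f * g f) \<partial>N)"
        unfolding set_lebesgue_integral_def by (subst integral_eq_nn_integral[symmetric]) (auto simp: g0)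
      also have "(\<integral>\<^sup>+f. ennreal (indicator A f * g f) \<partial>N) = (\<integral>\<^sup>+f. indicator A f * indicator B (f (Suc i)) \<partial>N)"
        by (intro nn_integral_cong) (simp add: g_eq indicator_def)
      also have "\<dots> = (\<integral>\<^sup>+f. indicator A f * (\<integral>\<^sup>+y. indicator B y \<partial>K i (f i)) \<partial>N)"
        by (rule core) (use i A in auto)
      also have "\<dots> = (\<integral>\<^sup>+f. ennreal (indicator A f * h f) \<partial>N)"
        by (intro nn_integral_cong)
           (simp add: h_def Kint split: split_indicator)
      also have "enn2real \<dots> = (\<integral>f\<in>A. h f \<partial>N)"
        unfolding set_lebesgue_integral_def
        by (subst integral_eq_nn_integral) (auto simp: h0)
      finally show ?thesis .
    qed
    have subF2: "subalgebra N (vimage_algebra (space N) (Y i) borel)"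
      unfolding subalgebra_def using sets_image_in_sets[of N "space N" "Y i" borel] Ymeas[of i n]
      by (simp add: N_def Y_def)
    have hF1: "h \<in> borel_measurable (nat_filtr N Y i)"
      unfolding h_def using measurable_compose[OF Yfilt[of i i] hm] i by (simp add: Y_def)
    have hF2: "h \<in> borel_measurable (vimage_algebra (space N) (Y i) borel)"
      unfolding h_def using measurable_compose[OF measurable_vimage_algebra1[of "Y i" "space N" borel] hm]
      by (simp add: Y_def)
    have ae1: "AE f in N. real_cond_exp N (nat_filtr N Y i) g f = h f"
      by (rule cond_exp_charact_prob[OF PN subalg ig ih hF1 eq])
    have ae2: "AE f in N. real_cond_exp N (vimage_algebra (space N) (Y i) borel) g f = h f"
      by (rule cond_exp_charact_prob[OF PN subF2 ig ih hF2 eq]) (use vim_sub[of i] i in auto)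
    from ae1 ae2 show "AE f in N. real_cond_exp N (nat_filtr N Y i) (indicator (Y (Suc i) -` B \<inter> space N)) f =
        real_cond_exp N (vimage_algebra (space N) (Y i) borel) (indicator (Y (Suc i) -` B \<inter> space N)) f"
      unfolding g_def by eventually_elim simp
  qed
  have intX: "integrable M (X i)" if "1 \<le> i" "i \<le> n" for i
    using assms(3) that unfolding martingale_def by auto
  have mgM: "AE \<omega> in M. real_cond_exp M (nat_filtr M X i) (\<lambda>\<omega>. X (Suc i) \<omega> \<bullet> b) \<omega> = X i \<omega> \<bullet> b"
    if "1 \<le> i" "i < n" "b \<in> Basis" for i b
    using assms(3) that unfolding martingale_def by auto
  have intY: "integrable N (Y i)" if i: "1 \<le> i" "i \<le> n" for i
  proof -
    have XiM: "X i \<in> borel_measurable M" using Xm i by simp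
    have "integrable N (\<lambda>f. f i) = integrable (distr N borel (\<lambda>f. f i)) (\<lambda>x. x)"
      by (rule integrable_distr_eq[symmetric]) (use Ymeas[of i n] in \<open>simp_all add: N_def\<close>)
    also have "\<dots> = integrable (\<mu> i) (\<lambda>x. x)" using margN[OF i] by (simp add: Y_def)
    also have "\<dots> = integrable M (\<lambda>\<omega>. X i \<omega>)" unfolding \<mu>_def by (rule integrable_distr_eq[OF XiM]) simp
    finally show ?thesis using intX[OF i] by (simp add: Y_def)
  qed
  have mgN: "AE f in N. real_cond_exp N (nat_filtr N Y i) (\<lambda>f. Y (Suc i) f \<bullet> b) f = Y i f \<bullet> b"
    if i: "1 \<le> i" "i < n" and b: "b \<in> Basis" for i b
  proof -
    define Hr where "Hr x = enn2real (\<integral>\<^sup>+y. ennreal (y \<bullet> b) \<partial>K i x) - enn2real (\<integral>\<^sup>+y. ennreal (- (y \<bullet> b)) \<partial>K i x)" for x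
    have Hrm[measurable]: "Hr \<in> borel_measurable borel"
      unfolding Hr_def using KG[of "\<lambda>y. ennreal (y \<bullet> b)" i] KG[of "\<lambda>y. ennreal (- (y \<bullet> b))" i] by measurable
    have XiM[measurable]: "X i \<in> borel_measurable M" using Xm i by simp
    have XSM[measurable]: "X (Suc i) \<in> borel_measurable M" using Xm i by simp
    have intXS: "integrable M (\<lambda>\<omega>. X (Suc i) \<omega> \<bullet> b)" using intX[of "Suc i"] i by (simp add: integrable_inner_left)
    have intXi: "integrable M (\<lambda>\<omega>. X i \<omega> \<bullet> b)" using intX[of i] i by (simp add: integrable_inner_left)
    have nnA: "(\<integral>\<^sup>+\<omega>. ennreal (indicator A (X i \<omega>)) * G (X (Suc i) \<omega>) \<partial>M) =
               (\<integral>\<^sup>+\<omega>. ennreal (indicator A (X i \<omega>)) * (\<integral>\<^sup>+y. G y \<partial>K i (X i \<omega>)) \<partial>M)"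
      if A[measurable]: "A \<in> sets borel" and G[measurable]: "G \<in> borel_measurable borel" for A G
    proof -
      have "(\<integral>\<^sup>+\<omega>. ennreal (indicator A (X i \<omega>)) * G (X (Suc i) \<omega>) \<partial>M) =
            (\<integral>\<^sup>+x. \<integral>\<^sup>+y. ennreal (indicator A x) * G y \<partial>K i x \<partial>\<mu> i)"
        using Kid[OF i, of "\<lambda>(x, y). ennreal (indicator A x) * G y"] by simp
      also have "\<dots> = (\<integral>\<^sup>+x. ennreal (indicator A x) * (\<integral>\<^sup>+y. G y \<partial>K i x) \<partial>\<mu> i)"
      proof (rule nn_integral_cong)
        fix x
        have GK: "G \<in> borel_measurable (K i x)" using G unfolding measurable_cong_sets[OF Ksets refl] .
        show "(\<integral>\<^sup>+y. ennreal (indicator A x) * G y \<partial>K i x) = ennreal (indicator A x) * (\<integral>\<^sup>+y. G y \<partial>K i x)"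
          by (rule nn_integral_cmult[OF GK])
      qed
      also have "\<dots> = (\<integral>\<^sup>+\<omega>. ennreal (indicator A (X i \<omega>)) * (\<integral>\<^sup>+y. G y \<partial>K i (X i \<omega>)) \<partial>M)"
        unfolding \<mu>_def by (rule nn_integral_distr[OF XiM]) (use KG[OF G, of i] in measurable)
      finally show ?thesis .
    qed
    have rfA: "integrable M (\<lambda>\<omega>. indicator A (X i \<omega>) * Hr (X i \<omega>))"
       "(\<integral>\<omega>. indicator A (X i \<omega>) * (X (Suc i) \<omega> \<bullet> b) \<partial>M) = (\<integral>\<omega>. indicator A (X i \<omega>) * Hr (X i \<omega>) \<partial>M)"
      if A[measurable]: "A \<in> sets borel" for A
      using real_from_nn[where D=M and c="\<lambda>\<omega>. indicator A (X i \<omega>)" and v="X (Suc i)" and w="X i" and L="K i" and b=b,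
          OF _ _ XSM XiM K nnA[OF A] intXS] unfolding Hr_def by (auto simp: indicator_def)
    define FM where "FM = nat_filtr M X i"
    have FM_space: "space FM = space M" unfolding FM_def nat_filtr_def by (simp add: space_measure_of_conv)
    have FM_gen_sub: "(\<Union>j\<in>{1..i}. {X j -` A \<inter> space M | A. A \<in> sets borel}) \<subseteq> sets M"
    proof
      fix E assume "E \<in> (\<Union>j\<in>{1..i}. {X j -` A \<inter> space M | A. A \<in> sets borel})"
      then obtain j A where j: "j \<in> {1..i}" and A: "A \<in> sets borel" and E: "E = X j -` A \<inter> space M" by blast
      have "X j \<in> borel_measurable M" using Xm j i by simp
      then show "E \<in> sets M" using measurable_sets[OF _ A] E by blast
    qed
    have FM_sets: "sets FM = sigma_sets (space M) (\<Union>j\<in>{1..i}. {X j -` A \<inter> space M | A. A \<in> sets borel})"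
      unfolding FM_def nat_filtr_def by (rule sets_measure_of) (auto)
    have FM_sub: "subalgebra M FM" unfolding subalgebra_def FM_space FM_sets
      using sets.sigma_sets_subset[OF FM_gen_sub] by simp
    interpret FMs: finite_measure_subalgebra M FM by unfold_locales (rule FM_sub)
    have mstep: "(\<integral>\<omega>. indicator A (X i \<omega>) * (X (Suc i) \<omega> \<bullet> b) \<partial>M) = (\<integral>\<omega>. indicator A (X i \<omega>) * (X i \<omega> \<bullet> b) \<partial>M)"
      if A[measurable]: "A \<in> sets borel" for A
    proof -
      define E where "E = X i -` A \<inter> space M"
      have "E \<in> {X i -` A \<inter> space M | A. A \<in> sets borel}" unfolding E_def using A by blast
      then have "E \<in> (\<Union>j\<in>{1..i}. {X j -` A \<inter> space M | A. A \<in> sets borel})" using i by (intro UN_I[of i]) auto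
      then have EF: "E \<in> sets FM" unfolding FM_sets by (rule sigma_sets.Basic)
      have ind: "indicator E \<omega> = indicator A (X i \<omega>)" if "\<omega> \<in> space M" for \<omega>
        using that unfolding E_def by (simp add: indicator_def)
      have "(\<integral>\<omega>. indicator A (X i \<omega>) * (X (Suc i) \<omega> \<bullet> b) \<partial>M) = (\<integral>\<omega>\<in>E. X (Suc i) \<omega> \<bullet> b \<partial>M)"
        unfolding set_lebesgue_integral_def by (intro Bochner_Integration.integral_cong) (simp_all add: ind)
      also have "\<dots> = (\<integral>\<omega>\<in>E. real_cond_exp M FM (\<lambda>\<omega>. X (Suc i) \<omega> \<bullet> b) \<omega> \<partial>M)"
        by (rule FMs.real_cond_exp_intA[OF intXS EF])
      also have "\<dots> = (\<integral>\<omega>\<in>E. X i \<omega> \<bullet> b \<partial>M)"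
      proof -
        have Em[measurable]: "E \<in> sets M" using EF FM_sub by (auto simp: subalgebra_def)
        have cm[measurable]: "real_cond_exp M FM (\<lambda>\<omega>. X (Suc i) \<omega> \<bullet> b) \<in> borel_measurable M"
          by (rule borel_measurable_cond_exp2)
        have mg': "AE \<omega> in M. real_cond_exp M FM (\<lambda>\<omega>. X (Suc i) \<omega> \<bullet> b) \<omega> = X i \<omega> \<bullet> b"
          using mgM[OF i b] unfolding FM_def .
        show ?thesis unfolding set_lebesgue_integral_def
          by (intro integral_cong_AE) (use mg' in auto)
      qed
      also have "\<dots> = (\<integral>\<omega>. indicator A (X i \<omega>) * (X i \<omega> \<bullet> b) \<partial>M)"
        unfolding set_lebesgue_integral_def by (intro Bochner_Integration.integral_cong) (simp_all add: ind)
      finally show ?thesis .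
    qed
    have M1: "AE x in \<mu> i. Hr x = x \<bullet> b"
    proof (rule density_unique_real)
      have "integrable M (\<lambda>\<omega>. indicator UNIV (X i \<omega>) * Hr (X i \<omega>))" by (rule rfA(1)) simp
      then have "integrable M (\<lambda>\<omega>. Hr (X i \<omega>))" by simp
      then show "integrable (\<mu> i) Hr" unfolding \<mu>_def by (subst integrable_distr_eq[OF XiM]) simp_all
      show "integrable (\<mu> i) (\<lambda>x. x \<bullet> b)" unfolding \<mu>_def using intXi by (subst integrable_distr_eq[OF XiM]) simp_all
      fix A assume "A \<in> sets (\<mu> i)"
      then have A[measurable]: "A \<in> sets borel" by (simp add: \<mu>_def)
      have "(\<integral>x\<in>A. Hr x \<partial>\<mu> i) = (\<integral>\<omega>. indicator A (X i \<omega>) * Hr (X i \<omega>) \<partial>M)"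
        unfolding set_lebesgue_integral_def \<mu>_def by (subst integral_distr[OF XiM]) simp_all
      also have "\<dots> = (\<integral>\<omega>. indicator A (X i \<omega>) * (X (Suc i) \<omega> \<bullet> b) \<partial>M)" using rfA(2)[OF A] by simp
      also have "\<dots> = (\<integral>\<omega>. indicator A (X i \<omega>) * (X i \<omega> \<bullet> b) \<partial>M)" by (rule mstep[OF A])
      also have "\<dots> = (\<integral>x\<in>A. x \<bullet> b \<partial>\<mu> i)"
        unfolding set_lebesgue_integral_def \<mu>_def by (subst integral_distr[OF XiM]) simp_all
      finally show "(\<integral>x\<in>A. Hr x \<partial>\<mu> i) = (\<integral>x\<in>A. x \<bullet> b \<partial>\<mu> i)" .
    qed
    have M1N: "AE f in N. Hr (f i) = f i \<bullet> b"
    proof -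
      have dm: "distr N borel (\<lambda>f. f i) = \<mu> i" using margN[of i] i by (simp add: Y_def)
      have "AE x in distr N borel (\<lambda>f. f i). Hr x = x \<bullet> b" unfolding dm by (rule M1)
      then show ?thesis by (subst (asm) AE_distr_iff) (use Ymeas[of i n] in \<open>simp_all add: N_def\<close>)
    qed
    have intYS: "integrable N (\<lambda>f. f (Suc i) \<bullet> b)" using intY[of "Suc i"] i by (simp add: Y_def integrable_inner_left)
    have intYi: "integrable N (\<lambda>f. f i \<bullet> b)" using intY[of i] i by (simp add: Y_def integrable_inner_left)
    have YSN[measurable]: "(\<lambda>f. f (Suc i)) \<in> borel_measurable N" using Ymeas[of "Suc i" n] by (simp add: N_def)
    have YiN[measurable]: "(\<lambda>f. f i) \<in> borel_measurable N" using Ymeas[of i n] by (simp add: N_def)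
    have eqE: "(\<integral>f\<in>E. f (Suc i) \<bullet> b \<partial>N) = (\<integral>f\<in>E. f i \<bullet> b \<partial>N)" if E: "E \<in> sets (nat_filtr N Y i)" for E
    proof -
      have EN[measurable]: "E \<in> sets N" using E filt_N by auto
      have nnE: "(\<integral>\<^sup>+f. ennreal (indicator E f) * G (f (Suc i)) \<partial>N) = (\<integral>\<^sup>+f. ennreal (indicator E f) * (\<integral>\<^sup>+y. G y \<partial>K i (f i)) \<partial>N)"
        if G: "G \<in> borel_measurable borel" for G
        using core[OF i E G] by (simp add: ennreal_indicator)
      have rfE: "(\<integral>f. indicator E f * (f (Suc i) \<bullet> b) \<partial>N) = (\<integral>f. indicator E f * Hr (f i) \<partial>N)"
        using real_from_nn(2)[where D=N and c="indicator E" and v="\<lambda>f. f (Suc i)" and w="\<lambda>f. f i" and L="K i" and b=b,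
          OF _ _ YSN YiN K nnE intYS] unfolding Hr_def by (auto simp: indicator_def)
      have "(\<integral>f\<in>E. f (Suc i) \<bullet> b \<partial>N) = (\<integral>f. indicator E f * Hr (f i) \<partial>N)"
        unfolding set_lebesgue_integral_def using rfE by simp
      also have "\<dots> = (\<integral>f. indicator E f * (f i \<bullet> b) \<partial>N)"
        by (intro integral_cong_AE) (use M1N in auto)
      also have "\<dots> = (\<integral>f\<in>E. f i \<bullet> b \<partial>N)" unfolding set_lebesgue_integral_def by simp
      finally show ?thesis .
    qed
    have gF: "(\<lambda>f. f i \<bullet> b) \<in> borel_measurable (nat_filtr N Y i)"
      using measurable_compose[OF Yfilt[of i i] borel_measurable_inner[OF measurable_ident_sets[OF refl] measurable_const]] i
      by (simp add: Y_def)
    have e1: "(\<lambda>f. Y (Suc i) f \<bullet> b) = (\<lambda>f. f (Suc i) \<bullet> b)" by (simp add: Y_def)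
    have e2: "\<And>f. Y i f \<bullet> b = f i \<bullet> b" by (simp add: Y_def)
    show ?thesis unfolding e1 e2
      by (rule cond_exp_charact_prob[OF PN subalg intYS intYi gF]) (use eqE in simp)
  qed
  show ?thesis
  proof (intro exI[of _ N] exI[of _ Y] conjI ballI)
    show "prob_space N" by (rule PN)
    show "Y i \<in> borel_measurable N" for i using Ymeas[of i n] by (simp add: N_def Y_def)
    show "markov N Y n" by (rule markovN)
    show "distr N borel (Y i) = distr M borel (X i)" if "i \<in> {1..n}" for i
      using margN[of i] that by (simp add: \<mu>_def)
    show "martingale N Y n"
      unfolding martingale_def using intY mgN by auto
  qed
qed

end
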